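(* Let $N\ge2$, let $f\in C(\overline{B_1(0)})$ be $x_N$-odd with $f\ge0$ in $B_1^+(0)$, and let $g_1,g_2\in C^1(\mathbb{R})$ be odd and nondecreasing with $g_1(s)\le g_2(s)$ for all $s\ge0$. For $i=1,2$ let $w_{f,i}$ be the solution of $-\Delta u+g_i(u)=f$ in $B_1(0)$, $u=0$ on $\partial B_1(0)$. Then $|w_{f,1}(x)|\ge|w_{f,2}(x)|$ for all $x\in B_1(0)$.
   Context: $B_1(0)$ is the open unit ball in $\mathbb{R}^N$, $B_1^+(0)=\{x\in B_1(0):x_N>0\}$. A function $w$ is $x_N$-odd if $w(x',x_N)=-w(x',-x_N)$. *)

theory Defs
  imports "HOL-Analysis.Analysis"
begin

definition pd :: "'n::finite \<Rightarrow> (real^'n \<Rightarrow> real) \<Rightarrow> real^'n \<Rightarrow> real" where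
  "pd i \<phi> x = deriv (\<lambda>t. \<phi> (x + t *\<^sub>R axis i 1)) 0"

definition laplacian :: "(real^'n::finite \<Rightarrow> real) \<Rightarrow> real^'n \<Rightarrow> real" where
  "laplacian \<phi> x = (\<Sum>i\<in>UNIV. pd i (pd i \<phi>) x)"

definition test_fun :: "(real^'n::finite \<Rightarrow> real) \<Rightarrow> bool" where
  "test_fun \<phi> \<longleftrightarrow>
     continuous_on UNIV \<phi> \<and>
     (\<forall>i x. (\<lambda>t. \<phi> (x + t *\<^sub>R axis i 1)) differentiable (at 0)) \<and>
     (\<forall>i. continuous_on UNIV (pd i \<phi>)) \<and>
     (\<forall>i j x. (\<lambda>t. pd i \<phi> (x + t *\<^sub>R axis j 1)) differentiable (at 0)) \<and>
     (\<forall>i j. continuous_on UNIV (pd j (pd i \<phi>))) \<and>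
     compact (closure {x. \<phi> x \<noteq> 0}) \<and>
     closure {x. \<phi> x \<noteq> 0} \<subseteq> ball 0 1"

text \<open>u is a (continuous, distributional) solution of -\<Delta>u + g(u) = f in B_1(0), u = 0 on the
  boundary sphere.\<close>
definition dirichlet_solution ::
    "(real \<Rightarrow> real) \<Rightarrow> (real^'n::finite \<Rightarrow> real) \<Rightarrow> (real^'n \<Rightarrow> real) \<Rightarrow> bool" where
  "dirichlet_solution g f u \<longleftrightarrow>
     continuous_on (cball 0 1) u \<and>
     (\<forall>x\<in>sphere 0 1. u x = 0) \<and>
     (\<forall>\<phi>. test_fun \<phi> \<longrightarrow>
        integral (ball 0 1) (\<lambda>x. u x * (- laplacian \<phi> x) + g (u x) * \<phi> x)
        = integral (ball 0 1) (\<lambda>x. f x * \<phi> x))"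

text \<open>Reflection in the k-th coordinate (k plays the role of the last coordinate x_N).\<close>
definition reflect :: "'n::finite \<Rightarrow> real^'n \<Rightarrow> real^'n" where
  "reflect k x = (\<chi> i. if i = k then - (x $ i) else x $ i)"

end

theory Submission
  imports Defs
begin

lemma cont_compact_integrable:
  fixes f :: "'a::euclidean_space \<Rightarrow> real"
  assumes "compact S" "continuous_on S f"
  shows "f integrable_on S"
proof -
  have "integrable lborel (\<lambda>x. indicator S x *\<^sub>R f x)"
    using borel_integrable_compact[OF assms] .
  then have "(\<lambda>x. indicator S x *\<^sub>R f x) integrable_on UNIV"
    using integrable_on_lborel by blast
  then show ?thesis
  proof -
    have "(\<lambda>x. if x \<in> S then f x else 0) = (\<lambda>x. indicator S x *\<^sub>R f x)"
      by (auto simp: indicator_def)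
    with \<open>(\<lambda>x. indicator S x *\<^sub>R f x) integrable_on UNIV\<close> show ?thesis
      using integrable_restrict_UNIV by metis
  qed
qed

lemma inner_shift_axis:
  fixes y :: "real^'n"
  shows "(y + t *\<^sub>R axis i 1) \<bullet> (y + t *\<^sub>R axis i 1) = y \<bullet> y + 2 * t * y $ i + t^2"
  by (simp add: inner_add_left inner_add_right inner_axis axis_nth power2_eq_square inner_commute algebra_simps)

lemma deriv_radial_line:
  fixes y :: "real^'n"
  assumes F: "\<And>z. (F has_real_derivative P z) (at z)"
  shows "((\<lambda>t. F ((y + t *\<^sub>R axis i 1) \<bullet> (y + t *\<^sub>R axis i 1))) has_real_derivative
            P (y \<bullet> y) * (2 * y $ i)) (at 0)"
proof -
  have q: "((\<lambda>t. y \<bullet> y + 2 * t * y $ i + t^2) has_real_derivative 2 * y $ i) (at 0)"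
    by (auto intro!: derivative_eq_intros)
  have "((\<lambda>t. F (y \<bullet> y + 2 * t * y $ i + t^2)) has_real_derivative P (y \<bullet> y + 2 * 0 * y $ i + 0^2) * (2 * y $ i)) (at 0)"
    by (rule DERIV_chain2[OF F q])
  then show ?thesis by (simp add: inner_shift_axis)
qed

lemma deriv_radial_line2:
  fixes y :: "real^'n"
  assumes P: "\<And>z. (P has_real_derivative P2 z) (at z)"
  shows "((\<lambda>t. 2 * (y + t *\<^sub>R axis j 1) $ i * P ((y + t *\<^sub>R axis j 1) \<bullet> (y + t *\<^sub>R axis j 1))) has_real_derivative
            2 * (if i = j then 1 else 0) * P (y \<bullet> y) + 2 * y $ i * (P2 (y \<bullet> y) * (2 * y $ j))) (at 0)"
proof -
  have a: "((\<lambda>t. 2 * (y + t *\<^sub>R axis j 1) $ i) has_real_derivative 2 * (if i = j then 1 else 0)) (at 0)"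
    by (auto simp: axis_def intro!: derivative_eq_intros)
  have b: "((\<lambda>t. P ((y + t *\<^sub>R axis j 1) \<bullet> (y + t *\<^sub>R axis j 1))) has_real_derivative
            P2 (y \<bullet> y) * (2 * y $ j)) (at 0)"
    by (rule deriv_radial_line[OF P])
  from DERIV_mult[OF a b] show ?thesis
    by (simp add: axis_def algebra_simps)
qed

lemma shift_eq: "(x::real^'n) + t *\<^sub>R e - x0 = (x - x0) + t *\<^sub>R e"
  by (simp add: algebra_simps)

lemma pd_radial:
  fixes x0 :: "real^'n"
  assumes F: "\<And>z. (F has_real_derivative P z) (at z)"
  shows "pd i (\<lambda>x. F ((x - x0) \<bullet> (x - x0))) = (\<lambda>x. 2 * (x - x0) $ i * P ((x - x0) \<bullet> (x - x0)))"
proof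
  fix x
  have "((\<lambda>t. F ((x + t *\<^sub>R axis i 1 - x0) \<bullet> (x + t *\<^sub>R axis i 1 - x0))) has_real_derivative
            P ((x - x0) \<bullet> (x - x0)) * (2 * (x - x0) $ i)) (at 0)"
    unfolding shift_eq by (rule deriv_radial_line[OF F])
  then show "pd i (\<lambda>x. F ((x - x0) \<bullet> (x - x0))) x = 2 * (x - x0) $ i * P ((x - x0) \<bullet> (x - x0))"
    unfolding pd_def by (simp add: DERIV_imp_deriv mult.commute)
qed

lemma pd_radial2:
  fixes x0 :: "real^'n"
  assumes P: "\<And>z. (P has_real_derivative P2 z) (at z)"
  shows "pd j (\<lambda>x. 2 * (x - x0) $ i * P ((x - x0) \<bullet> (x - x0))) =
     (\<lambda>x. 2 * (if i = j then 1 else 0) * P ((x - x0) \<bullet> (x - x0)) + 2 * (x - x0) $ i * (P2 ((x - x0) \<bullet> (x - x0)) * (2 * (x - x0) $ j)))"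
proof
  fix x
  have "((\<lambda>t. 2 * (x + t *\<^sub>R axis j 1 - x0) $ i * P ((x + t *\<^sub>R axis j 1 - x0) \<bullet> (x + t *\<^sub>R axis j 1 - x0))) has_real_derivative
         2 * (if i = j then 1 else 0) * P ((x - x0) \<bullet> (x - x0)) + 2 * (x - x0) $ i * (P2 ((x - x0) \<bullet> (x - x0)) * (2 * (x - x0) $ j))) (at 0)"
    unfolding shift_eq by (rule deriv_radial_line2[OF P])
  then show "pd j (\<lambda>x. 2 * (x - x0) $ i * P ((x - x0) \<bullet> (x - x0))) x = 2 * (if i = j then 1 else 0) * P ((x - x0) \<bullet> (x - x0)) + 2 * (x - x0) $ i * (P2 ((x - x0) \<bullet> (x - x0)) * (2 * (x - x0) $ j))"
    unfolding pd_def by (simp add: DERIV_imp_deriv)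
qed

lemma laplacian_radial:
  fixes x0 :: "real^'n"
  assumes F: "\<And>z. (F has_real_derivative P z) (at z)"
    and P: "\<And>z. (P has_real_derivative P2 z) (at z)"
  shows "laplacian (\<lambda>x. F ((x - x0) \<bullet> (x - x0))) x =
     2 * real CARD('n) * P ((x - x0) \<bullet> (x - x0)) + 4 * ((x - x0) \<bullet> (x - x0)) * P2 ((x - x0) \<bullet> (x - x0))"
proof -
  let ?y = "x - x0"
  have "laplacian (\<lambda>x. F ((x - x0) \<bullet> (x - x0))) x =
     (\<Sum>i\<in>UNIV. 2 * P (?y \<bullet> ?y) + 4 * P2 (?y \<bullet> ?y) * (?y $ i * ?y $ i))"
    unfolding laplacian_def pd_radial[OF F] pd_radial2[OF P] by (simp add: algebra_simps)
  also have "\<dots> = 2 * real CARD('n) * P (?y \<bullet> ?y) + 4 * P2 (?y \<bullet> ?y) * (\<Sum>i\<in>UNIV. ?y $ i * ?y $ i)"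
    by (simp add: sum.distrib sum_distrib_left)
  also have "(\<Sum>i\<in>UNIV. ?y $ i * ?y $ i) = ?y \<bullet> ?y"
    by (simp add: inner_vec_def)
  finally show ?thesis by simp
qed

lemma radial_test:
  fixes x0 :: "real^'n"
  assumes F: "\<And>z. (F has_real_derivative P z) (at z)"
    and P: "\<And>z. (P has_real_derivative P2 z) (at z)"
    and P2: "continuous_on UNIV P2"
    and Fz: "\<And>z. z \<ge> r^2 \<Longrightarrow> F z = 0"
    and r: "r > 0" "cball x0 r \<subseteq> ball 0 1"
  shows "test_fun (\<lambda>x. F ((x - x0) \<bullet> (x - x0)))"
    and "closure {x. F ((x - x0) \<bullet> (x - x0)) \<noteq> 0} \<subseteq> cball x0 r"
proof -
  have cF: "continuous_on UNIV F"
    using F by (meson DERIV_isCont continuous_at_imp_continuous_on)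
  have cP: "continuous_on UNIV P"
    using P by (meson DERIV_isCont continuous_at_imp_continuous_on)
  have cq: "continuous_on UNIV (\<lambda>x::real^'n. (x - x0) \<bullet> (x - x0))"
    by (intro continuous_intros)
  have cFq: "continuous_on UNIV (\<lambda>x::real^'n. F ((x - x0) \<bullet> (x - x0)))"
    using continuous_on_compose2[OF cF cq] by simp
  have cPq: "continuous_on UNIV (\<lambda>x::real^'n. P ((x - x0) \<bullet> (x - x0)))"
    using continuous_on_compose2[OF cP cq] by simp
  have cP2q: "continuous_on UNIV (\<lambda>x::real^'n. P2 ((x - x0) \<bullet> (x - x0)))"
    using continuous_on_compose2[OF P2 cq] by simp
  have sub: "{x. F ((x - x0) \<bullet> (x - x0)) \<noteq> 0} \<subseteq> cball x0 r"
  proof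
    fix x assume "x \<in> {x. F ((x - x0) \<bullet> (x - x0)) \<noteq> 0}"
    then have "\<not> (x - x0) \<bullet> (x - x0) \<ge> r^2" using Fz by auto
    then have "norm (x - x0) ^ 2 < r ^ 2" by (simp add: power2_norm_eq_inner)
    then have "norm (x - x0) < r" using r(1) by (simp add: power_less_imp_less_base)
    then show "x \<in> cball x0 r" by (simp add: dist_norm norm_minus_commute)
  qed
  show clsub: "closure {x. F ((x - x0) \<bullet> (x - x0)) \<noteq> 0} \<subseteq> cball x0 r"
    using sub closure_minimal closed_cball by blast
  show "test_fun (\<lambda>x. F ((x - x0) \<bullet> (x - x0)))"
    unfolding test_fun_def
  proof (intro conjI allI)
    show "continuous_on UNIV (\<lambda>x. F ((x - x0) \<bullet> (x - x0)))" by (rule cFq)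
    fix i x
    show "(\<lambda>t. F ((x + t *\<^sub>R axis i 1 - x0) \<bullet> (x + t *\<^sub>R axis i 1 - x0))) differentiable at 0"
      using deriv_radial_line[OF F, of "x - x0" i] unfolding shift_eq
      by (auto simp: differentiable_def has_field_derivative_def)
  next
    fix i
    show "continuous_on UNIV (pd i (\<lambda>x. F ((x - x0) \<bullet> (x - x0))))"
      unfolding pd_radial[OF F] by (intro continuous_intros cPq)
  next
    fix i j x
    show "(\<lambda>t. pd i (\<lambda>x. F ((x - x0) \<bullet> (x - x0))) (x + t *\<^sub>R axis j 1)) differentiable at 0"
      unfolding pd_radial[OF F]
      using deriv_radial_line2[OF P, of "x - x0" j i] unfolding shift_eq
      by (auto simp: differentiable_def has_field_derivative_def)
  next
    fix i j
    show "continuous_on UNIV (pd j (pd i (\<lambda>x. F ((x - x0) \<bullet> (x - x0)))))"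
      unfolding pd_radial[OF F] pd_radial2[OF P] by (intro continuous_intros cPq cP2q)
  next
    show "compact (closure {x. F ((x - x0) \<bullet> (x - x0)) \<noteq> 0})"
      using clsub by (meson bounded_cball bounded_subset bounded_closure compact_eq_bounded_closed closed_closure)
  next
    show "closure {x. F ((x - x0) \<bullet> (x - x0)) \<noteq> 0} \<subseteq> ball 0 1"
      using clsub r(2) by blast
  qed
qed

lemma has_integral_UNIV_of_cbox:
  fixes f :: "'a::euclidean_space \<Rightarrow> real"
  assumes "continuous_on (cbox a b) f" "\<And>x. x \<notin> cbox a b \<Longrightarrow> f x = 0"
  shows "(f has_integral integral (cbox a b) f) UNIV"
  using has_integral_on_superset[OF integrable_integral[OF integrable_continuous[OF assms(1)]]] assms(2)
  by blast

lemma integral_partial_zero: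
  fixes G D :: "real^'n \<Rightarrow> real"
  assumes der: "\<And>x. ((\<lambda>t. G (x + t *\<^sub>R axis i 1)) has_real_derivative D x) (at 0)"
    and cG: "continuous_on UNIV G" and cD: "continuous_on UNIV D"
    and zG: "\<And>x. x \<notin> cball c R \<Longrightarrow> G x = 0"
    and zD: "\<And>x. x \<notin> cball c R \<Longrightarrow> D x = 0"
  shows "(D has_integral 0) UNIV"
proof -
  let ?e = "axis i (1::real) :: real^'n"
  obtain a where a: "cball c (R + 2) \<subseteq> cbox (-a) a"
    using bounded_subset_cbox_symmetric[OF bounded_cball] by blast
  let ?B = "cbox (-a) a"
  have zGB: "G x = 0" if "x \<notin> ?B" for x
  proof -
    have "x \<notin> cball c (R+2)" using that a by auto
    then show ?thesis by (intro zG) auto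
  qed
  have zDB: "D x = 0" if "x \<notin> ?B" for x
  proof -
    have "x \<notin> cball c (R+2)" using that a by auto
    then show ?thesis by (intro zD) auto
  qed
  have cGB: "continuous_on ?B G" using cG continuous_on_subset by blast
  have cDB: "continuous_on ?B D" using cD continuous_on_subset by blast
  define IG where "IG = integral ?B G"
  define ID where "ID = integral ?B D"
  have hG: "(G has_integral IG) UNIV" unfolding IG_def by (rule has_integral_UNIV_of_cbox[OF cGB zGB])
  have hD: "(D has_integral ID) UNIV" unfolding ID_def by (rule has_integral_UNIV_of_cbox[OF cDB zDB])
  have derall: "((\<lambda>t. G (x + t *\<^sub>R ?e)) has_real_derivative D (x + \<tau> *\<^sub>R ?e)) (at \<tau>)" for x \<tau>
  proof -
    have "((\<lambda>t. G ((x + \<tau> *\<^sub>R ?e) + t *\<^sub>R ?e)) has_real_derivative D (x + \<tau> *\<^sub>R ?e)) (at 0)"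
      by (rule der)
    then have "((\<lambda>t. G (x + (t + \<tau>) *\<^sub>R ?e)) has_real_derivative D (x + \<tau> *\<^sub>R ?e)) (at 0)"
      by (simp add: algebra_simps scaleR_add_left)
    then show ?thesis using DERIV_shift[of "\<lambda>t. G (x + t *\<^sub>R ?e)" _ 0 \<tau>] by simp
  qed
  have shift: "((\<lambda>x. G (x + t *\<^sub>R ?e)) has_integral IG) UNIV" for t
  proof -
    have "(G has_integral IG) ?B" unfolding IG_def
      by (rule integrable_integral[OF integrable_continuous[OF cGB]])
    from has_integral_affinity[OF this, of 1 "t *\<^sub>R ?e"]
    have "((\<lambda>x. G (x + t *\<^sub>R ?e)) has_integral IG) ((\<lambda>x. x - t *\<^sub>R ?e) ` ?B)"
      by simp
    moreover have "G (x + t *\<^sub>R ?e) = 0" if "x \<notin> (\<lambda>x. x - t *\<^sub>R ?e) ` ?B" for x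
    proof -
      have "x + t *\<^sub>R ?e \<notin> ?B"
      proof
        assume "x + t *\<^sub>R ?e \<in> ?B"
        then have "(x + t *\<^sub>R ?e) - t *\<^sub>R ?e \<in> (\<lambda>x. x - t *\<^sub>R ?e) ` ?B" by (rule imageI)
        then show False using that by simp
      qed
      then show ?thesis using zGB by blast
    qed
    ultimately show ?thesis using has_integral_on_superset by blast
  qed
  have "norm ID \<le> \<epsilon> * Henstock_Kurzweil_Integration.content ?B" if "\<epsilon> > 0" for \<epsilon>
  proof -
    have "uniformly_continuous_on ?B D"
      using compact_uniformly_continuous[OF cDB compact_cbox] .
    then obtain d where d: "d > 0" and dd: "\<And>x x'. x \<in> ?B \<Longrightarrow> x' \<in> ?B \<Longrightarrow> dist x' x < d \<Longrightarrow> dist (D x') (D x) < \<epsilon>"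
      using \<open>\<epsilon> > 0\<close> unfolding uniformly_continuous_on_def by metis
    define t where "t = min (d/2) 1"
    have t: "t > 0" "t < d" "t \<le> 1" using d by (auto simp: t_def)
    have close: "\<bar>D x' - D x\<bar> \<le> \<epsilon>" if "dist x' x < t" for x x'
    proof (cases "x \<in> ?B \<and> x' \<in> ?B")
      case True
      then show ?thesis using dd[of x x'] that t by (auto simp: dist_real_def)
    next
      case False
      have "x \<notin> cball c R \<and> x' \<notin> cball c R"
      proof (cases "x \<in> ?B")
        case True
        then have "x' \<notin> cball c (R+2)" using False a by auto
        then have "dist c x' > R + 2" by simp
        moreover have "dist c x' \<le> dist c x + dist x x'" by (rule dist_triangle)
        ultimately have "dist c x > R + 1" using that t by (simp add: dist_commute)
        then show ?thesis using \<open>dist c x' > R + 2\<close> by auto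
      next
        case False
        then have "x \<notin> cball c (R+2)" using a by auto
        then have "dist c x > R + 2" by simp
        moreover have "dist c x \<le> dist c x' + dist x' x" by (rule dist_triangle)
        ultimately have "dist c x' > R + 1" using that t by simp
        then show ?thesis using \<open>dist c x > R + 2\<close> by auto
      qed
      then show ?thesis using zD \<open>\<epsilon> > 0\<close> by simp
    qed
    define Q where "Q = (\<lambda>x. (G (x + t *\<^sub>R ?e) - G x) / t - D x)"
    have hQ: "(Q has_integral ((IG - IG) / t - ID)) UNIV"
      unfolding Q_def
      by (intro has_integral_diff has_integral_divide shift hG hD)
    have Qb: "\<bar>Q x\<bar> \<le> \<epsilon>" for x
    proof -
      obtain z where z: "0 < z" "z < t" "G (x + t *\<^sub>R ?e) - G (x + 0 *\<^sub>R ?e) = (t - 0) * D (x + z *\<^sub>R ?e)"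
        using MVT2[of 0 t "\<lambda>s. G (x + s *\<^sub>R ?e)" "\<lambda>s. D (x + s *\<^sub>R ?e)"] derall t(1) by blast
      have "Q x = D (x + z *\<^sub>R ?e) - D x" unfolding Q_def using z t(1) by simp
      moreover have "dist (x + z *\<^sub>R ?e) x < t" using z by (simp add: dist_norm)
      ultimately show ?thesis using close by simp
    qed
    have zQ: "Q x = 0" if "x \<notin> ?B" for x
    proof -
      have "x \<notin> cball c (R+2)" using that a by auto
      then have "dist c x > R + 2" by simp
      moreover have "dist c x \<le> dist c (x + t *\<^sub>R ?e) + dist (x + t *\<^sub>R ?e) x" by (rule dist_triangle)
      moreover have "dist (x + t *\<^sub>R ?e) x = t" using t by (simp add: dist_norm)
      ultimately have "dist c (x + t *\<^sub>R ?e) > R" using t by simp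
      then show ?thesis unfolding Q_def using zG zD that a \<open>dist c x > R + 2\<close> by auto
    qed
    have "(Q has_integral ((IG - IG) / t - ID)) ?B"
    proof -
      have "(\<lambda>x. if x \<in> ?B then Q x else 0) = Q" using zQ by auto
      then show ?thesis using hQ has_integral_restrict_UNIV[of ?B Q] by simp
    qed
    from has_integral_bound[OF less_imp_le[OF \<open>\<epsilon> > 0\<close>] this] Qb
    show ?thesis by simp
  qed
  then have "ID = 0"
  proof -
    assume H: "\<And>\<epsilon>. \<epsilon> > 0 \<Longrightarrow> norm ID \<le> \<epsilon> * Henstock_Kurzweil_Integration.content ?B"
    obtain C where C: "C = Henstock_Kurzweil_Integration.content ?B" by blast
    have cpos: "C \<ge> 0" using C by simp
    have H': "\<And>\<epsilon>. \<epsilon> > 0 \<Longrightarrow> norm ID \<le> \<epsilon> * C" using H C by simp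
    show "ID = 0"
    proof (rule ccontr)
      assume "ID \<noteq> 0"
      then have n: "norm ID > 0" by simp
      have "norm ID / (2 * (C + 1)) > 0" using n cpos by simp
      from H'[OF this] have "norm ID \<le> norm ID / (2 * (C + 1)) * C" .
      also have "\<dots> < norm ID" using n cpos by (simp add: field_simps add_nonneg_pos)
      finally show False by simp
    qed
  qed
  then show ?thesis using hD by simp
qed

lemma deriv_at_interior:
  assumes "(f has_real_derivative D) (at z within {a..b})" "a < z" "z < (b::real)"
  shows "(f has_real_derivative D) (at z)"
proof -
  have "z \<in> interior {a..b}" using assms by simp
  then show ?thesis using assms(1) at_within_interior by metis
qed

lemma radial_profile:
  fixes n s r1 r :: real
  assumes n: "n > 0" and s: "0 < s" "s < r1" "r1 < r"
  obtains F P P2 a where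
    "\<And>z. (F has_real_derivative P z) (at z)"
    "\<And>z. (P has_real_derivative P2 z) (at z)"
    "continuous_on UNIV P2"
    "\<And>z. z \<ge> r^2 \<Longrightarrow> F z = 0"
    "\<And>z. F z \<ge> 0"
    "\<And>z. 2*n*P z + 4*z*P2 z = max 0 ((z - r1^2)*(r^2 - z)) - a * min 1 (max 0 (2 - 2*z/s^2))"
    "a \<ge> 0"
    "\<And>z. z \<ge> r^2 \<Longrightarrow> P z = 0"
    "\<And>z. z \<ge> r^2 \<Longrightarrow> P2 z = 0"
proof -
  define \<alpha> where "\<alpha> = n/2"
  define c where "c = s^2/4"
  define \<iota> where "\<iota> = (\<lambda>z::real. min 1 (max 0 (2 - 2*z/s^2)))"
  define \<nu> where "\<nu> = (\<lambda>z::real. max 0 ((z - r1^2)*(r^2 - z)))"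
  define w where "w = (\<lambda>z::real. z powr (\<alpha> - 1))"
  define A where "A = c powr \<alpha> / \<alpha> + integral {c..r^2} (\<lambda>z. w z * \<iota> z)"
  define B where "B = integral {c..r^2} (\<lambda>z. w z * \<nu> z)"
  define a where "a = B / A"
  define R where "R = (\<lambda>z. \<nu> z - a * \<iota> z)"
  define Q where "Q = (\<lambda>z. - a * c powr \<alpha> / \<alpha> + integral {c..z} (\<lambda>t. w t * R t))"
  define P where "P = (\<lambda>z. if z \<le> c then - a / (2*n) else z powr (-\<alpha>) * Q z / 4)"
  define P2 where "P2 = (\<lambda>z. if z \<le> c then 0 else (R z - 2*n*P z) / (4*z))"
  define T where "T = r^2 + 1"
  define F where "F = (\<lambda>z. - integral {z..T} P)"
  have \<alpha>: "\<alpha> > 0" using n by (simp add: \<alpha>_def)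
  have c: "c > 0" "c < s^2/2" using s by (auto simp: c_def)
  have s2: "s^2 > 0" using s by simp
  have sr1: "s^2 < r1^2" "r1^2 < r^2" using s by (auto intro: power_strict_mono)
  have \<iota>1: "\<iota> z = 1" if "z \<le> s^2/2" for z
  proof -
    have "2*z/s^2 \<le> 1" using that s by (simp add: field_simps)
    then show ?thesis by (simp add: \<iota>_def)
  qed
  have \<iota>0: "\<iota> z = 0" if "z \<ge> s^2" for z
  proof -
    have "2*z/s^2 \<ge> 2" using that s by (simp add: field_simps)
    then show ?thesis by (simp add: \<iota>_def)
  qed
  have \<iota>ge: "\<iota> z \<ge> 0" for z by (simp add: \<iota>_def)
  have \<nu>ge: "\<nu> z \<ge> 0" for z by (simp add: \<nu>_def)
  have \<nu>0: "\<nu> z = 0" if "z \<le> r1^2 \<or> z \<ge> r^2" for z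
  proof -
    have "(z - r1^2)*(r^2 - z) \<le> 0"
      using that sr1 by (auto intro: mult_nonpos_nonneg mult_nonneg_nonpos)
    then show ?thesis by (simp add: \<nu>_def)
  qed
  have wpos: "w z > 0" if "z > 0" for z using that by (simp add: w_def)
  have cw: "continuous_on {c..b} w" for b
  proof -
    have "isCont w z" if "z \<in> {c..b}" for z
      using that c unfolding w_def by (intro continuous_intros) auto
    then show ?thesis by (simp add: continuous_at_imp_continuous_on)
  qed
  have c\<iota>: "continuous_on UNIV \<iota>" unfolding \<iota>_def using s by (intro continuous_intros) auto
  have c\<nu>: "continuous_on UNIV \<nu>" unfolding \<nu>_def by (intro continuous_intros)
  have cR: "continuous_on UNIV R" unfolding R_def by (intro continuous_intros c\<iota> c\<nu>)
  have cwR: "continuous_on {c..b} (\<lambda>t. w t * R t)" for b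
    by (intro continuous_intros cw continuous_on_subset[OF cR]) auto
  have cw\<iota>: "continuous_on {c..b} (\<lambda>t. w t * \<iota> t)" for b
    by (intro continuous_intros cw continuous_on_subset[OF c\<iota>]) auto
  have cw\<nu>: "continuous_on {c..b} (\<lambda>t. w t * \<nu> t)" for b
    by (intro continuous_intros cw continuous_on_subset[OF c\<nu>]) auto
  have iwR: "(\<lambda>t. w t * R t) integrable_on {c..b}" for b using cwR integrable_continuous_real by blast
  have iw\<iota>: "(\<lambda>t. w t * \<iota> t) integrable_on {c..b}" for b using cw\<iota> integrable_continuous_real by blast
  have iw\<nu>: "(\<lambda>t. w t * \<nu> t) integrable_on {c..b}" for b using cw\<nu> integrable_continuous_real by blast
  have A: "A > 0"
  proof -
    have "integral {c..r^2} (\<lambda>z. w z * \<iota> z) \<ge> 0"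
      using iw\<iota> c by (intro Henstock_Kurzweil_Integration.integral_nonneg) (auto intro!: mult_nonneg_nonneg less_imp_le[OF wpos] \<iota>ge)
    moreover have "c powr \<alpha> / \<alpha> > 0" using c \<alpha> by simp
    ultimately show ?thesis by (simp add: A_def)
  qed
  have B: "B \<ge> 0"
    unfolding B_def
    using iw\<nu> c by (intro Henstock_Kurzweil_Integration.integral_nonneg) (auto intro!: mult_nonneg_nonneg less_imp_le[OF wpos] \<nu>ge)
  have a: "a \<ge> 0" using A B by (simp add: a_def)
  have R_small: "R z = - a" if "z \<le> s^2/2" for z
  proof -
    have "z \<le> r1^2" using that sr1 s2 by linarith
    then show ?thesis using \<iota>1[OF that] \<nu>0 by (simp add: R_def)
  qed
  have R_big: "R z = 0" if "z \<ge> r^2" for z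
    using that \<nu>0 \<iota>0[of z] sr1 by (simp add: R_def)
  have R_mid: "R z = \<nu> z" if "z \<ge> s^2" for z
    using \<iota>0[OF that] by (simp add: R_def)
  have R_low: "R z \<le> 0" if "z \<le> r1^2" for z
    using \<nu>0 that a \<iota>ge by (simp add: R_def)
  have Q_der: "(Q has_real_derivative w z * R z) (at z)" if "z > c" for z
  proof -
    have "((\<lambda>x. integral {c..x} (\<lambda>t. w t * R t)) has_real_derivative w z * R z) (at z within {c..z+1})"
      using integral_has_real_derivative[OF cwR, of z] that by simp
    then have "((\<lambda>x. integral {c..x} (\<lambda>t. w t * R t)) has_real_derivative w z * R z) (at z)"
      using that by (intro deriv_at_interior) auto
    then show ?thesis unfolding Q_def by (auto intro!: derivative_eq_intros)
  qed
  have intw: "integral {c..z} w = (z powr \<alpha> - c powr \<alpha>) / \<alpha>" if "c \<le> z" for z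
  proof -
    have "(w has_integral (z powr \<alpha> / \<alpha> - c powr \<alpha> / \<alpha>)) {c..z}"
    proof (rule fundamental_theorem_of_calculus[OF that])
      fix x assume x: "x \<in> {c..z}"
      then have "x > 0" using c by auto
      have "((\<lambda>x. x powr \<alpha> / \<alpha>) has_real_derivative (\<alpha> * x powr (\<alpha> - 1)) / \<alpha>) (at x)"
        using DERIV_cdivide[OF has_real_derivative_powr[OF \<open>x > 0\<close>, of \<alpha>], of \<alpha>] by simp
      then have "((\<lambda>x. x powr \<alpha> / \<alpha>) has_real_derivative w x) (at x)"
        using \<alpha> by (simp add: w_def)
      then show "((\<lambda>x. x powr \<alpha> / \<alpha>) has_vector_derivative w x) (at x within {c..z})"
        by (simp add: has_real_derivative_iff_has_vector_derivative has_vector_derivative_at_within)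
    qed
    then show ?thesis by (simp add: integral_unique diff_divide_distrib)
  qed
  have Q_small: "Q z = - a * z powr \<alpha> / \<alpha>" if "c \<le> z" "z \<le> s^2/2" for z
  proof -
    have "integral {c..z} (\<lambda>t. w t * R t) = integral {c..z} (\<lambda>t. - a * w t)"
      using R_small that by (intro integral_cong) auto
    also have "\<dots> = - a * integral {c..z} w" by simp
    also have "\<dots> = - a * ((z powr \<alpha> - c powr \<alpha>) / \<alpha>)" using intw that by simp
    finally show ?thesis unfolding Q_def by (simp add: diff_divide_distrib add_divide_distrib algebra_simps)
  qed
  have Q_r2: "Q (r^2) = 0"
  proof -
    have "integral {c..r^2} (\<lambda>t. w t * R t) = integral {c..r^2} (\<lambda>t. w t * \<nu> t - a * (w t * \<iota> t))"
      by (intro integral_cong) (simp add: R_def algebra_simps)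
    also have "\<dots> = B - a * integral {c..r^2} (\<lambda>t. w t * \<iota> t)"
    proof -
      have "(\<lambda>t. a * (w t * \<iota> t)) integrable_on {c..r^2}" using integrable_on_cmult_left[OF iw\<iota>, of a] by simp
      then show ?thesis unfolding B_def by (simp add: integral_diff[OF iw\<nu>])
    qed
    finally have "Q (r^2) = B - a * (c powr \<alpha> / \<alpha> + integral {c..r^2} (\<lambda>t. w t * \<iota> t))"
      unfolding Q_def by (simp add: algebra_simps)
    also have "\<dots> = B - a * A" by (simp add: A_def)
    also have "\<dots> = 0" using A by (simp add: a_def)
    finally show ?thesis .
  qed
  have cr: "c \<le> r^2" using c sr1 s2 by linarith
  have Q_big: "Q z = 0" if "z \<ge> r^2" for z
  proof -
    have "integral {c..z} (\<lambda>t. w t * R t) = integral {c..r^2} (\<lambda>t. w t * R t) + integral {r^2..z} (\<lambda>t. w t * R t)"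
      using Henstock_Kurzweil_Integration.integral_combine[OF cr that iwR] by simp
    moreover have "integral {r^2..z} (\<lambda>t. w t * R t) = 0"
    proof -
      have "integral {r^2..z} (\<lambda>t. w t * R t) = integral {r^2..z} (\<lambda>t. 0)"
        using R_big by (intro integral_cong) auto
      then show ?thesis by simp
    qed
    ultimately show ?thesis using Q_r2 unfolding Q_def by simp
  qed
  have Q_le: "Q z \<le> 0" if "z \<ge> c" for z
  proof (cases "z \<le> r1^2")
    case True
    have "integral {c..z} (\<lambda>t. w t * R t) \<le> integral {c..z} (\<lambda>t. 0)"
      using iwR True c
      by (intro integral_le) (auto intro!: mult_nonneg_nonpos less_imp_le[OF wpos] R_low)
    moreover have "a * c powr \<alpha> / \<alpha> \<ge> 0" using a \<alpha> by simp
    ultimately show ?thesis unfolding Q_def by simp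
  next
    case False
    show ?thesis
    proof (cases "z \<le> r^2")
      case True
      have "integral {c..z} (\<lambda>t. w t * R t) + integral {z..r^2} (\<lambda>t. w t * R t) = integral {c..r^2} (\<lambda>t. w t * R t)"
        using Henstock_Kurzweil_Integration.integral_combine[OF that True iwR] by simp
      then have "Q (r^2) = Q z + integral {z..r^2} (\<lambda>t. w t * R t)" unfolding Q_def by simp
      moreover have "integral {z..r^2} (\<lambda>t. w t * R t) \<ge> 0"
      proof -
        have "(\<lambda>t. w t * R t) integrable_on {z..r^2}"
          using continuous_on_subset[OF cwR[of "r^2"], of "{z..r^2}"] that
          by (intro integrable_continuous_real) auto
        moreover have "w t * R t \<ge> 0" if "t \<in> {z..r^2}" for t
        proof -
          have "t \<ge> s^2" using that False sr1 by auto
          then have "R t = \<nu> t" by (rule R_mid)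
          moreover have "t > 0" using that False s2 sr1 by (simp, linarith)
          ultimately show ?thesis using \<nu>ge[of t] wpos[of t] by simp
        qed
        ultimately show ?thesis by (rule Henstock_Kurzweil_Integration.integral_nonneg)
      qed
      ultimately show ?thesis using Q_r2 by simp
    next
      case False
      then show ?thesis using Q_big by simp
    qed
  qed
  have P_small: "P z = - a / (2*n)" if "z \<le> s^2/2" for z
  proof (cases "z \<le> c")
    case False
    then have "Q z = - a * z powr \<alpha> / \<alpha>" using Q_small that by simp
    moreover have "z > 0" using False c by simp
    ultimately have "P z = z powr (-\<alpha>) * (- a * z powr \<alpha> / \<alpha>) / 4" using False by (simp add: P_def)
    also have "\<dots> = - a * (z powr (-\<alpha>) * z powr \<alpha>) / (4 * \<alpha>)" by (simp add: field_simps)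
    also have "z powr (-\<alpha>) * z powr \<alpha> = 1" using \<open>z > 0\<close> by (simp add: powr_add[symmetric])
    finally show ?thesis by (simp add: \<alpha>_def)
  qed (simp add: P_def)
  have P_le: "P z \<le> 0" for z
  proof (cases "z \<le> c")
    case True then show ?thesis using a n by (simp add: P_def)
  next
    case False
    then have "Q z \<le> 0" using Q_le by simp
    then show ?thesis using False by (simp add: P_def mult_nonneg_nonpos)
  qed
  have P_big: "P z = 0" if "z \<ge> r^2" for z
  proof -
    have "\<not> z \<le> c" using that c sr1 s2 by linarith
    then show ?thesis using that Q_big by (simp add: P_def)
  qed
  have P_der_big: "(P has_real_derivative (R z - 2*n*P z) / (4*z)) (at z)" if "z > c" for z
  proof -
    have z: "z > 0" using that c by simp
    have d: "((\<lambda>z. z powr (-\<alpha>) * Q z / 4) has_real_derivative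
       ((-\<alpha>) * z powr (-\<alpha> - 1) * Q z + z powr (-\<alpha>) * (w z * R z)) / 4) (at z)"
      using has_real_derivative_powr[OF z, of "-\<alpha>"] Q_der[OF that] z
      by (auto intro!: derivative_eq_intros)
    have e1: "z powr (-\<alpha> - 1) = z powr (-\<alpha>) / z" using z by (simp add: powr_diff)
    have e2: "z powr (-\<alpha>) * w z = 1 / z"
    proof -
      have "z powr (-\<alpha>) * w z = z powr (-\<alpha> + (\<alpha> - 1))" unfolding w_def using powr_add[of z "-\<alpha>" "\<alpha> - 1"] by simp
      also have "\<dots> = z powr (-1)" by simp
      finally show ?thesis using z by (simp add: powr_minus_divide)
    qed
    have calc: "((-\<alpha>) * z powr (-\<alpha> - 1) * Q z + z powr (-\<alpha>) * (w z * R z)) / 4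
        = (R z - 2*n*(z powr (-\<alpha>) * Q z / 4)) / (4*z)"
      unfolding e1 using e2 z by (simp add: \<alpha>_def field_simps)
    have Pz: "P z = z powr (-\<alpha>) * Q z / 4" using that by (simp add: P_def)
    have eq: "((-\<alpha>) * z powr (-\<alpha> - 1) * Q z + z powr (-\<alpha>) * (w z * R z)) / 4 = (R z - 2*n*P z) / (4*z)"
      unfolding calc Pz ..
    have d': "((\<lambda>z. z powr (-\<alpha>) * Q z / 4) has_real_derivative (R z - 2*n*P z) / (4*z)) (at z)"
      using d unfolding eq .
    show ?thesis
      by (rule has_field_derivative_transform_within_open[OF d', of "{c<..}"]) (use that in \<open>auto simp: P_def\<close>)
  qed
  have P_der: "(P has_real_derivative P2 z) (at z)" for z
  proof (cases "z > c")
    case True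
    then show ?thesis using P_der_big[OF True] by (simp add: P2_def)
  next
    case False
    have "((\<lambda>_. - a / (2*n)) has_real_derivative 0) (at z)" by simp
    then have "(P has_real_derivative 0) (at z)"
      by (rule has_field_derivative_transform_within_open[of _ _ _ "{..<s^2/2}"])
         (use False c P_small in auto)
    then show ?thesis using False by (simp add: P2_def)
  qed
  have cP: "continuous_on UNIV P"
    using P_der by (meson DERIV_isCont continuous_at_imp_continuous_on)
  have cP2: "continuous_on UNIV P2"
  proof -
    have c1: "continuous_on {c<..} P2"
    proof -
      have "continuous_on {c<..} (\<lambda>z. (R z - 2*n*P z) / (4*z))"
        using c by (intro continuous_intros continuous_on_subset[OF cR] continuous_on_subset[OF cP]) auto
      then show ?thesis by (rule continuous_on_eq) (simp add: P2_def)
    qed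
    have c2: "continuous_on {..<s^2/2} P2"
    proof -
      have "continuous_on {..<s^2/2} (\<lambda>z. 0::real)" by simp
      moreover have "P2 z = 0" if "z \<in> {..<s^2/2}" for z
        using that R_small[of z] P_small[of z] n by (auto simp: P2_def)
      ultimately show ?thesis using continuous_on_eq[of "{..<s^2/2}" "\<lambda>z. 0" P2] by simp
    qed
    have "isCont P2 z" for z
    proof (cases "z > c")
      case True
      then show ?thesis using c1 continuous_on_eq_continuous_at[of "{c<..}" P2] by simp
    next
      case False
      then have "z < s^2/2" using c by simp
      then show ?thesis using c2 continuous_on_eq_continuous_at[of "{..<s^2/2}" P2] by simp
    qed
    then show ?thesis by (simp add: continuous_at_imp_continuous_on)
  qed
  have ident: "2*n*P z + 4*z*P2 z = R z" for z
  proof (cases "z > c")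
    case True
    then have "z \<noteq> 0" using c by simp
    then show ?thesis using True by (simp add: P2_def)
  next
    case False
    then show ?thesis using P_small[of z] R_small[of z] c n by (simp add: P2_def)
  qed
  have iP: "P integrable_on {x..y}" for x y
    using continuous_on_subset[OF cP] by (intro integrable_continuous_real) auto
  have F_big: "F z = 0" if "z \<ge> r^2" for z
  proof -
    have "integral {z..T} P = integral {z..T} (\<lambda>_. 0)"
      using that P_big by (intro integral_cong) auto
    then show ?thesis by (simp add: F_def)
  qed
  have F_nonneg: "F z \<ge> 0" for z
  proof -
    have "integral {z..T} P \<le> integral {z..T} (\<lambda>_. 0)"
      using iP P_le by (intro integral_le) auto
    then show ?thesis by (simp add: F_def)
  qed
  have F_der: "(F has_real_derivative P z) (at z)" for z
  proof (cases "z > r^2")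
    case True
    have "((\<lambda>_. 0) has_real_derivative 0) (at z)" by simp
    then have "(F has_real_derivative 0) (at z)"
      by (rule has_field_derivative_transform_within_open[of _ _ _ "{r^2<..}"])
         (use True F_big in auto)
    then show ?thesis using P_big[of z] True by simp
  next
    case False
    then have zT: "z < T" by (simp add: T_def)
    have "((\<lambda>x. integral {x..T} P) has_real_derivative - P z) (at z within {z-1..T})"
      using integral_has_real_derivative'[OF continuous_on_subset[OF cP], of "z-1" T z] zT by auto
    then have "((\<lambda>x. integral {x..T} P) has_real_derivative - P z) (at z)"
      using zT by (intro deriv_at_interior) auto
    then have "((\<lambda>x. - integral {x..T} P) has_real_derivative - (- P z)) (at z)"
      by (rule DERIV_minus)
    then show ?thesis by (simp add: F_def)
  qed
  show ?thesis
  proof (rule that[of F P P2 a])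
    show "2*n*P z + 4*z*P2 z = max 0 ((z - r1^2)*(r^2 - z)) - a * min 1 (max 0 (2 - 2*z/s^2))" for z
      using ident[of z] by (simp add: R_def \<nu>_def \<iota>_def)
  next
    fix z assume z: "z \<ge> r^2"
    then have "\<not> z \<le> c" using c sr1 s2 by linarith
    then show "P2 z = 0" using z P_big R_big by (simp add: P2_def)
  qed (use F_der P_der cP2 F_big F_nonneg a P_big in auto)
qed

lemma has_integral_cball_superset:
  fixes h :: "real^'n \<Rightarrow> real"
  assumes "continuous_on (cball x0 r) h" "\<And>x. x \<notin> cball x0 r \<Longrightarrow> h x = 0" "cball x0 r \<subseteq> S"
  shows "(h has_integral integral (cball x0 r) h) S"
proof -
  have "h integrable_on cball x0 r" using cont_compact_integrable[OF compact_cball assms(1)] .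
  then have "(h has_integral integral (cball x0 r) h) (cball x0 r)" by (rule integrable_integral)
  then show ?thesis using has_integral_on_superset assms(2,3) by blast
qed

lemma zero_of_integral_zero:
  fixes h :: "real^'n \<Rightarrow> real"
  assumes "continuous_on (cball x0 r) h" "\<And>x. x \<in> cball x0 r \<Longrightarrow> h x \<ge> 0"
    and "integral (cball x0 r) h = 0" and y: "y \<in> ball x0 r"
  shows "h y = 0"
proof -
  obtain a b where ab: "cbox a b \<subseteq> ball x0 r" "y \<in> box a b"
    using open_contains_cbox[OF open_ball y] by metis
  have sub: "cbox a b \<subseteq> cball x0 r" using ab(1) ball_subset_cball by blast
  have ia: "h integrable_on cbox a b"
    using continuous_on_subset[OF assms(1) sub] by (rule integrable_continuous)
  have iK: "h integrable_on cball x0 r" using cont_compact_integrable[OF compact_cball assms(1)] .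
  have "integral (cbox a b) h \<le> integral (cball x0 r) h"
    using sub ia iK assms(2) by (intro integral_subset_le) auto
  moreover have "integral (cbox a b) h \<ge> 0"
    using ia assms(2) sub by (intro Henstock_Kurzweil_Integration.integral_nonneg) auto
  ultimately have "integral (cbox a b) h = 0" using assms(3) by simp
  then have "(h has_integral 0) (cbox a b)" using ia by (metis integrable_integral)
  moreover have "y \<in> cbox a b" using ab(2) box_subset_cbox by blast
  moreover have "box a b \<noteq> {}" using ab(2) by blast
  ultimately show ?thesis
    using has_integral_0_cbox_imp_0[of a b h y] continuous_on_subset[OF assms(1) sub] assms(2) sub box_subset_cbox
    by blast
qed

lemma rho_out:
  fixes x x0 :: "real^'n"
  assumes "x \<notin> cball x0 r" "r > 0"
  shows "(x - x0) \<bullet> (x - x0) > r^2"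
proof -
  have "dist x0 x > r" using assms by simp
  then have "norm (x - x0) > r" by (simp add: dist_norm norm_minus_commute)
  then have "norm (x - x0) ^ 2 > r ^ 2" using assms(2) by (simp add: power_strict_mono)
  then show ?thesis by (simp add: power2_norm_eq_inner)
qed

lemma rho_dist:
  fixes x x0 :: "real^'n"
  shows "(x - x0) \<bullet> (x - x0) = (dist x x0)^2"
  by (simp add: dist_norm power2_norm_eq_inner)

lemma radial_lap_int_zero:
  fixes x0 :: "real^'n"
  assumes F: "\<And>z. (F has_real_derivative P z) (at z)"
    and P: "\<And>z. (P has_real_derivative P2 z) (at z)"
    and P2: "continuous_on UNIV P2"
    and Fz: "\<And>z. z \<ge> r^2 \<Longrightarrow> F z = 0"
    and Pz: "\<And>z. z \<ge> r^2 \<Longrightarrow> P z = 0"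
    and P2z: "\<And>z. z \<ge> r^2 \<Longrightarrow> P2 z = 0"
    and r: "r > 0" "cball x0 r \<subseteq> ball 0 1"
  shows "(laplacian (\<lambda>x. F ((x - x0) \<bullet> (x - x0))) has_integral 0) UNIV"
proof -
  let ?\<phi> = "\<lambda>x. F ((x - x0) \<bullet> (x - x0))"
  have tf: "test_fun ?\<phi>" using radial_test(1)[OF F P P2 Fz r] .
  have each: "(pd i (pd i ?\<phi>) has_integral 0) UNIV" for i
  proof (rule integral_partial_zero[where G = "pd i ?\<phi>" and c = x0 and R = r])
    fix x
    have "((\<lambda>t. 2 * (x + t *\<^sub>R axis i 1 - x0) $ i * P ((x + t *\<^sub>R axis i 1 - x0) \<bullet> (x + t *\<^sub>R axis i 1 - x0))) has_real_derivative
         2 * (if i = i then 1 else 0) * P ((x - x0) \<bullet> (x - x0)) + 2 * (x - x0) $ i * (P2 ((x - x0) \<bullet> (x - x0)) * (2 * (x - x0) $ i))) (at 0)"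
      unfolding shift_eq by (rule deriv_radial_line2[OF P])
    then show "((\<lambda>t. pd i ?\<phi> (x + t *\<^sub>R axis i 1)) has_real_derivative pd i (pd i ?\<phi>) x) (at 0)"
      unfolding pd_radial[OF F] pd_radial2[OF P] by simp
  next
    show "continuous_on UNIV (pd i ?\<phi>)" using tf unfolding test_fun_def by blast
    show "continuous_on UNIV (pd i (pd i ?\<phi>))" using tf unfolding test_fun_def by blast
  next
    fix x assume "x \<notin> cball x0 r"
    then have "(x - x0) \<bullet> (x - x0) \<ge> r^2" using rho_out[OF _ r(1), of x x0] by simp
    then show "pd i ?\<phi> x = 0" "pd i (pd i ?\<phi>) x = 0"
      unfolding pd_radial[OF F] pd_radial2[OF P] using Pz P2z by auto
  qed
  have "((\<lambda>x. \<Sum>i\<in>UNIV. pd i (pd i ?\<phi>) x) has_integral (\<Sum>i\<in>(UNIV::'n set). 0)) UNIV"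
    by (rule has_integral_sum) (use each in auto)
  then show ?thesis unfolding laplacian_def[abs_def] by simp
qed

lemma core_mv:
  fixes w :: "real^'n \<Rightarrow> real" and x0 :: "real^'n"
  assumes r: "r > 0" and K: "cball x0 r \<subseteq> ball 0 1"
    and cw: "continuous_on (cball x0 r) w"
    and wM: "\<And>y. y \<in> cball x0 r \<Longrightarrow> w y \<le> M" and wx0: "w x0 = M"
    and sub: "\<And>\<phi>. test_fun \<phi> \<Longrightarrow> (\<And>x. \<phi> x \<ge> 0) \<Longrightarrow> closure {x. \<phi> x \<noteq> 0} \<subseteq> cball x0 r \<Longrightarrow>
                 integral (ball 0 1) (\<lambda>x. w x * laplacian \<phi> x) \<ge> 0"
    and y: "r/2 < dist y x0" "dist y x0 < r"
  shows "w y = M"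
proof -
  define n where "n = real CARD('n)"
  have n: "n > 0" by (simp add: n_def)
  define r1 where "r1 = r/2"
  define \<nu> where "\<nu> = (\<lambda>z::real. max 0 ((z - r1^2)*(r^2 - z)))"
  define \<rho> where "\<rho> = (\<lambda>x::real^'n. (x - x0) \<bullet> (x - x0))"
  let ?K = "cball x0 r"
  have cKw: "x \<in> ?K \<Longrightarrow> x \<in> ?K" for x by simp
  have c\<rho>: "continuous_on UNIV \<rho>" unfolding \<rho>_def by (intro continuous_intros)
  have c\<nu>: "continuous_on UNIV (\<lambda>x. \<nu> (\<rho> x))" unfolding \<nu>_def using c\<rho> by (intro continuous_intros) auto
  define h where "h = (\<lambda>x. (M - w x) * \<nu> (\<rho> x))"
  have ch: "continuous_on ?K h" unfolding h_def
    by (intro continuous_intros cw continuous_on_subset[OF c\<nu>]) auto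
  have hge: "h x \<ge> 0" if "x \<in> ?K" for x using wM[OF that] unfolding h_def \<nu>_def by simp
  define I\<nu> where "I\<nu> = integral ?K (\<lambda>x. \<nu> (\<rho> x))"
  define Iw where "Iw = integral ?K h"
  have i\<nu>: "(\<lambda>x. \<nu> (\<rho> x)) integrable_on ?K"
    using cont_compact_integrable[OF compact_cball continuous_on_subset[OF c\<nu>]] by simp
  have ih: "h integrable_on ?K" using cont_compact_integrable[OF compact_cball ch] .
  have I\<nu>ge: "I\<nu> \<ge> 0" unfolding I\<nu>_def using i\<nu>
    by (intro Henstock_Kurzweil_Integration.integral_nonneg) (auto simp: \<nu>_def)
  have Iwge: "Iw \<ge> 0" unfolding Iw_def using ih hge
    by (intro Henstock_Kurzweil_Integration.integral_nonneg) auto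
  have key: "Iw \<le> \<eta> * I\<nu>" if \<eta>: "\<eta> > 0" for \<eta>
  proof -
    have x0K: "x0 \<in> ?K" using r by simp
    obtain \<delta> where \<delta>: "\<delta> > 0" and d\<delta>: "\<And>y. y \<in> ?K \<Longrightarrow> dist y x0 < \<delta> \<Longrightarrow> dist (w y) (w x0) < \<eta>"
      using cw \<eta> x0K unfolding continuous_on_iff by metis
    define s where "s = min \<delta> (r1/2)"
    have s: "0 < s" "s < r1" "r1 < r" "s \<le> \<delta>" using \<delta> r by (auto simp: s_def r1_def)
    obtain F P P2 a where
      Fd: "\<And>z. (F has_real_derivative P z) (at z)" and
      Pd: "\<And>z. (P has_real_derivative P2 z) (at z)" and
      cP2: "continuous_on UNIV P2" and
      Fz: "\<And>z. z \<ge> r^2 \<Longrightarrow> F z = 0" and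
      Fge: "\<And>z. F z \<ge> 0" and
      ident: "\<And>z. 2*n*P z + 4*z*P2 z = max 0 ((z - r1^2)*(r^2 - z)) - a * min 1 (max 0 (2 - 2*z/s^2))" and
      a: "a \<ge> 0" and
      Pz: "\<And>z. z \<ge> r^2 \<Longrightarrow> P z = 0" and
      P2z: "\<And>z. z \<ge> r^2 \<Longrightarrow> P2 z = 0"
      using radial_profile[OF n s(1) s(2) s(3)] by metis
    define \<iota> where "\<iota> = (\<lambda>z::real. min 1 (max 0 (2 - 2*z/s^2)))"
    let ?\<phi> = "\<lambda>x. F ((x - x0) \<bullet> (x - x0))"
    define L where "L = (\<lambda>x. \<nu> (\<rho> x) - a * \<iota> (\<rho> x))"
    have lap: "laplacian ?\<phi> x = L x" for x
      unfolding laplacian_radial[OF Fd Pd] L_def \<rho>_def \<nu>_def \<iota>_def n_def[symmetric] ident ..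
    have tf: "test_fun ?\<phi>" by (rule radial_test(1)[OF Fd Pd cP2 Fz r K])
    have supp: "closure {x. ?\<phi> x \<noteq> 0} \<subseteq> ?K" by (rule radial_test(2)[OF Fd Pd cP2 Fz r K])
    have subi: "integral (ball 0 1) (\<lambda>x. w x * L x) \<ge> 0"
      using sub[OF tf Fge supp] unfolding lap .
    have c\<iota>: "continuous_on UNIV (\<lambda>x. \<iota> (\<rho> x))" unfolding \<iota>_def using c\<rho> s(1) by (intro continuous_intros) auto
    have cL: "continuous_on UNIV L" unfolding L_def by (intro continuous_intros c\<nu> c\<iota>)
    have s2: "s^2 < r^2" using s by (simp add: power_strict_mono)
    have Lz: "L x = 0" if "x \<notin> ?K" for x
    proof -
      have "\<rho> x > r^2" unfolding \<rho>_def by (rule rho_out[OF that r])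
      moreover have "r1^2 \<le> r^2" using r by (simp add: r1_def power_mono)
      ultimately have "(\<rho> x - r1^2) * (r^2 - \<rho> x) \<le> 0" by (intro mult_nonneg_nonpos) auto
      then have "\<nu> (\<rho> x) = 0" unfolding \<nu>_def by simp
      moreover have "\<iota> (\<rho> x) = 0"
      proof -
        have "2 * \<rho> x / s^2 \<ge> 2" using \<open>\<rho> x > r^2\<close> s2 s(1) by (simp add: field_simps)
        then show ?thesis by (simp add: \<iota>_def)
      qed
      ultimately show ?thesis by (simp add: L_def)
    qed
    have "(L has_integral 0) UNIV"
      using radial_lap_int_zero[OF Fd Pd cP2 Fz Pz P2z r K] unfolding lap[abs_def] .
    moreover have "(L has_integral integral ?K L) UNIV"
      by (rule has_integral_cball_superset[OF continuous_on_subset[OF cL] Lz]) auto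
    ultimately have IL: "integral ?K L = 0" using has_integral_unique by blast
    have cwL: "continuous_on ?K (\<lambda>x. w x * L x)" by (intro continuous_intros cw continuous_on_subset[OF cL]) auto
    have "((\<lambda>x. w x * L x) has_integral integral ?K (\<lambda>x. w x * L x)) (ball 0 1)"
      by (rule has_integral_cball_superset[OF cwL]) (use Lz K in auto)
    then have IwL: "integral ?K (\<lambda>x. w x * L x) \<ge> 0" using subi integral_unique by metis
    define g where "g = (\<lambda>x. (M - w x) * \<iota> (\<rho> x))"
    have cg: "continuous_on ?K g" unfolding g_def by (intro continuous_intros cw continuous_on_subset[OF c\<iota>]) auto
    have ig: "g integrable_on ?K" using cont_compact_integrable[OF compact_cball cg] .
    have i\<iota>: "(\<lambda>x. \<iota> (\<rho> x)) integrable_on ?K"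
      using cont_compact_integrable[OF compact_cball continuous_on_subset[OF c\<iota>]] by simp
    have iL: "L integrable_on ?K" using cont_compact_integrable[OF compact_cball continuous_on_subset[OF cL]] by simp
    have iwL: "(\<lambda>x. w x * L x) integrable_on ?K" using cont_compact_integrable[OF compact_cball cwL] .
    have eqML: "(\<lambda>x. M * L x - w x * L x) = (\<lambda>x. h x - a * g x)"
      by (auto simp: h_def g_def L_def algebra_simps)
    have "integral ?K (\<lambda>x. M * L x - w x * L x) = M * integral ?K L - integral ?K (\<lambda>x. w x * L x)"
      using integral_diff[OF integrable_on_cmult_left[OF iL, of M] iwL] by simp
    moreover have "integral ?K (\<lambda>x. h x - a * g x) = Iw - a * integral ?K g"
      using integral_diff[OF ih integrable_on_cmult_left[OF ig, of a]] by (simp add: Iw_def)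
    ultimately have "Iw - a * integral ?K g \<le> 0" using IL IwL eqML by simp
    moreover have "integral ?K g \<le> \<eta> * integral ?K (\<lambda>x. \<iota> (\<rho> x))"
    proof -
      have "integral ?K g \<le> integral ?K (\<lambda>x. \<eta> * \<iota> (\<rho> x))"
      proof (rule integral_le[OF ig])
        show "(\<lambda>x. \<eta> * \<iota> (\<rho> x)) integrable_on ?K" using integrable_on_cmult_left[OF i\<iota>, of \<eta>] by simp
        fix x assume x: "x \<in> ?K"
        show "g x \<le> \<eta> * \<iota> (\<rho> x)"
        proof (cases "dist x x0 < s")
          case True
          then have "dist (w x) (w x0) < \<eta>" using d\<delta>[OF x] s(4) by simp
          then have "M - w x \<le> \<eta>" using wx0 by (simp add: dist_real_def)
          moreover have "\<iota> (\<rho> x) \<ge> 0" by (simp add: \<iota>_def)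
          ultimately show ?thesis unfolding g_def by (simp add: mult_right_mono)
        next
          case False
          then have "dist x x0 ^ 2 \<ge> s^2" using s(1) by (simp add: power_mono)
          then have "\<rho> x \<ge> s^2" unfolding \<rho>_def rho_dist .
          then have "2 * \<rho> x / s^2 \<ge> 2" using s(1) by (simp add: field_simps)
          then have "\<iota> (\<rho> x) = 0" by (simp add: \<iota>_def)
          then show ?thesis by (simp add: g_def)
        qed
      qed
      then show ?thesis by simp
    qed
    moreover have "I\<nu> - a * integral ?K (\<lambda>x. \<iota> (\<rho> x)) = 0"
    proof -
      have "integral ?K L = I\<nu> - a * integral ?K (\<lambda>x. \<iota> (\<rho> x))"
        unfolding L_def I\<nu>_def using integral_diff[OF i\<nu> integrable_on_cmult_left[OF i\<iota>, of a]] by simp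
      then show ?thesis using IL by simp
    qed
    ultimately have "Iw \<le> a * (\<eta> * integral ?K (\<lambda>x. \<iota> (\<rho> x)))"
      using a by (smt (verit) mult_left_mono)
    also have "\<dots> = \<eta> * I\<nu>" using \<open>I\<nu> - a * integral ?K (\<lambda>x. \<iota> (\<rho> x)) = 0\<close> by (simp add: algebra_simps)
    finally show ?thesis .
  qed
  have "Iw = 0"
  proof (rule ccontr)
    assume "Iw \<noteq> 0"
    then have pos: "Iw > 0" using Iwge by simp
    have "Iw / (2 * (I\<nu> + 1)) > 0" using pos I\<nu>ge by simp
    from key[OF this] have "Iw \<le> Iw / (2 * (I\<nu> + 1)) * I\<nu>" .
    also have "\<dots> < Iw" using pos I\<nu>ge by (simp add: field_simps add_nonneg_pos)
    finally show False by simp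
  qed
  then have "h y = 0"
    using zero_of_integral_zero[OF ch hge] y by (simp add: Iw_def dist_commute)
  moreover have "\<nu> (\<rho> y) > 0"
  proof -
    have "\<rho> y = dist y x0 ^ 2" unfolding \<rho>_def by (rule rho_dist)
    moreover have "dist y x0 ^ 2 > r1^2" using y r by (simp add: r1_def power_strict_mono)
    moreover have "dist y x0 ^ 2 < r^2" using y r by (simp add: power_strict_mono)
    ultimately show ?thesis unfolding \<nu>_def by simp
  qed
  ultimately show ?thesis unfolding h_def by simp
qed

lemma unit_away:
  fixes x0 :: "real^'n"
  obtains u where "norm u = 1" "\<And>t. t \<ge> 0 \<Longrightarrow> norm (x0 + t *\<^sub>R u) = norm x0 + t"
proof (cases "x0 = 0")
  case True
  show ?thesis by (rule that[of "axis undefined 1"]) (auto simp: True)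
next
  case False
  show ?thesis
  proof (rule that[of "x0 /\<^sub>R norm x0"])
    show "norm (x0 /\<^sub>R norm x0) = 1" using False by simp
    fix t :: real assume t: "t \<ge> 0"
    have "x0 + t *\<^sub>R (x0 /\<^sub>R norm x0) = (1 + t / norm x0) *\<^sub>R x0" by (simp add: algebra_simps divide_inverse)
    then have "norm (x0 + t *\<^sub>R (x0 /\<^sub>R norm x0)) = (1 + t / norm x0) * norm x0"
      using t by simp
    also have "\<dots> = norm x0 + t" using False by (simp add: field_simps)
    finally show "norm (x0 + t *\<^sub>R (x0 /\<^sub>R norm x0)) = norm x0 + t" .
  qed
qed

lemma max_principle:
  fixes w :: "real^'n \<Rightarrow> real" and U :: "(real^'n) set"
  assumes U: "open U" "U \<subseteq> ball 0 1" and cw: "continuous_on (closure U) w"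
    and bd: "\<And>x. x \<in> closure U \<Longrightarrow> x \<notin> U \<Longrightarrow> w x \<le> 0"
    and sub: "\<And>\<phi>. test_fun \<phi> \<Longrightarrow> (\<And>x. \<phi> x \<ge> 0) \<Longrightarrow> closure {x. \<phi> x \<noteq> 0} \<subseteq> U \<Longrightarrow>
                 integral (ball 0 1) (\<lambda>x. w x * laplacian \<phi> x) \<ge> 0"
    and x: "x \<in> U"
  shows "w x \<le> 0"
proof (rule ccontr)
  assume "\<not> w x \<le> 0"
  then have wx: "w x > 0" by simp
  have cU: "compact (closure U)"
    using bounded_subset[OF bounded_ball U(2)] compact_closure by blast
  have xU: "x \<in> closure U" using x closure_subset by blast
  have "closure U \<noteq> {}" using xU by (metis empty_iff)
  from continuous_attains_sup[OF cU this cw]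
  obtain xm where xm: "xm \<in> closure U" "\<And>y. y \<in> closure U \<Longrightarrow> w y \<le> w xm"
    by blast
  define M where "M = w xm"
  have M: "M > 0" using xm(2)[OF xU] wx by (simp add: M_def)
  define S where "S = closure U \<inter> w -` {M}"
  have cS: "compact S"
  proof -
    have "closed S" unfolding S_def by (rule continuous_closed_preimage[OF cw closed_closure closed_singleton])
    then have "compact (closure U \<inter> S)" by (rule compact_Int_closed[OF cU])
    moreover have "closure U \<inter> S = S" by (auto simp: S_def)
    ultimately show ?thesis by simp
  qed
  have Sne: "S \<noteq> {}" using xm(1) by (auto simp: S_def M_def)
  obtain x0 where x0: "x0 \<in> S" "\<And>y. y \<in> S \<Longrightarrow> norm y \<le> norm x0"
    using continuous_attains_sup[OF cS Sne continuous_on_norm_id] by blast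
  have x0c: "x0 \<in> closure U" "w x0 = M" using x0(1) by (auto simp: S_def)
  have x0U: "x0 \<in> U"
  proof (rule ccontr)
    assume "x0 \<notin> U"
    then have "w x0 \<le> 0" by (rule bd[OF x0c(1)])
    then show False using x0c(2) M by simp
  qed
  obtain r where r: "r > 0" "cball x0 r \<subseteq> U" using U(1) x0U open_contains_cball by blast
  obtain u where u: "norm u = 1" "\<And>t. t \<ge> 0 \<Longrightarrow> norm (x0 + t *\<^sub>R u) = norm x0 + t"
    using unit_away by blast
  define y where "y = x0 + (3*r/4) *\<^sub>R u"
  have dy: "dist y x0 = 3*r/4" using u(1) r(1) by (simp add: y_def dist_norm)
  have "w y = M"
  proof (rule core_mv[where w=w and M=M and ?x0.0=x0 and r=r])
    show "r > 0" by (rule r(1))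
    show "w x0 = M" by (rule x0c(2))
    show "cball x0 r \<subseteq> ball 0 1" using r(2) U(2) by blast
    show "continuous_on (cball x0 r) w" using continuous_on_subset[OF cw] r(2) closure_subset by blast
    show "w z \<le> M" if "z \<in> cball x0 r" for z
    proof -
      have "z \<in> closure U" using that r(2) closure_subset by blast
      then show ?thesis unfolding M_def by (rule xm(2))
    qed
    show "integral (ball 0 1) (\<lambda>x. w x * laplacian \<phi> x) \<ge> 0"
      if "test_fun \<phi>" "\<And>x. \<phi> x \<ge> 0" "closure {x. \<phi> x \<noteq> 0} \<subseteq> cball x0 r" for \<phi>
    proof (rule sub[OF that(1) that(2)])
      show "closure {x. \<phi> x \<noteq> 0} \<subseteq> U" using that(3) r(2) by (rule order_trans)
    qed
    show "r / 2 < dist y x0" "dist y x0 < r" using dy r(1) by auto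
  qed
  moreover have "y \<in> closure U"
  proof -
    have "y \<in> cball x0 r" using dy r(1) by (simp add: dist_commute)
    then show ?thesis using r(2) closure_subset by blast
  qed
  ultimately have "y \<in> S" by (simp add: S_def)
  then have "norm y \<le> norm x0" by (rule x0(2))
  moreover have "norm y = norm x0 + 3*r/4" using u(2)[of "3*r/4"] r(1) by (simp add: y_def)
  ultimately show False using r(1) by simp
qed

definition sg :: "'n::finite \<Rightarrow> 'n \<Rightarrow> real" where "sg k j = (if j = k then -1 else 1)"

lemma sg_sq[simp]: "sg k j * sg k j = 1" by (simp add: sg_def)

lemma refl_nth[simp]: "reflect k x $ i = (if i = k then - (x $ i) else x $ i)"
  by (simp add: reflect_def)

lemma refl_refl[simp]: "reflect k (reflect k x) = x"
  by (simp add: vec_eq_iff)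

lemma refl_line: "reflect k (x + t *\<^sub>R axis j 1) = reflect k x + (sg k j * t) *\<^sub>R axis j 1"
  by (simp add: vec_eq_iff axis_def sg_def)

lemma linear_refl: "linear (reflect k)"
  by (auto simp: linear_iff vec_eq_iff)

lemma cont_refl: "continuous_on S (reflect k)"
  using linear_continuous_on[OF linear_conv_bounded_linear[THEN iffD1, OF linear_refl]] continuous_on_subset by blast

lemma inner_refl[simp]: "reflect k x \<bullet> reflect k x = x \<bullet> x"
  unfolding inner_vec_def by (rule sum.cong) auto

lemma norm_refl[simp]: "norm (reflect k x) = norm x"
  by (simp add: norm_eq_sqrt_inner)

lemma refl_image_cbox:
  "reflect k ` cbox a b = cbox (\<chi> i. if i = k then - (b $ i) else a $ i) (\<chi> i. if i = k then - (a $ i) else b $ i)"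
proof
  show "reflect k ` cbox a b \<subseteq> cbox (\<chi> i. if i = k then - (b $ i) else a $ i) (\<chi> i. if i = k then - (a $ i) else b $ i)"
    by (auto simp: mem_box_cart)
  show "cbox (\<chi> i. if i = k then - (b $ i) else a $ i) (\<chi> i. if i = k then - (a $ i) else b $ i) \<subseteq> reflect k ` cbox a b"
  proof
    fix x assume x: "x \<in> cbox (\<chi> i. if i = k then - (b $ i) else a $ i) (\<chi> i. if i = k then - (a $ i) else b $ i)"
    have "reflect k x \<in> cbox a b"
      unfolding mem_box_cart
    proof (intro allI)
      fix i
      from x have "(\<chi> i. if i = k then - (b $ i) else a $ i) $ i \<le> x $ i \<and> x $ i \<le> (\<chi> i. if i = k then - (a $ i) else b $ i) $ i"
        unfolding mem_box_cart by blast
      then show "a $ i \<le> reflect k x $ i \<and> reflect k x $ i \<le> b $ i" by (cases "i = k") auto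
    qed
    moreover have "x = reflect k (reflect k x)" by simp
    ultimately show "x \<in> reflect k ` cbox a b" by blast
  qed
qed

lemma refl_content: "Henstock_Kurzweil_Integration.content (reflect k ` cbox a b) = Henstock_Kurzweil_Integration.content (cbox a b)"
proof (cases "cbox a b = {}")
  case True then show ?thesis by simp
next
  case False
  let ?a = "(\<chi> i. if i = k then - (b $ i) else a $ i) :: real^'a" and ?b = "(\<chi> i. if i = k then - (a $ i) else b $ i) :: real^'a"
  have ne: "cbox ?a ?b \<noteq> {}" using False refl_image_cbox[of k a b] by auto
  have "Henstock_Kurzweil_Integration.content (cbox ?a ?b) = prod (\<lambda>i. ?b$i - ?a$i) UNIV" using content_cbox_cart[OF ne] .
  also have "\<dots> = prod (\<lambda>i. b$i - a$i) UNIV" by (intro prod.cong) auto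
  also have "\<dots> = Henstock_Kurzweil_Integration.content (cbox a b)" using content_cbox_cart[OF False] by simp
  finally show ?thesis by (simp add: refl_image_cbox)
qed

lemma refl_cbox_sym: "reflect k ` cbox (-a) a = cbox (-a) a"
proof -
  have "(\<chi> i. if i = k then - (a $ i) else (-a) $ i) = -a" by (simp add: vec_eq_iff)
  moreover have "(\<chi> i. if i = k then - ((-a) $ i) else a $ i) = a" by (simp add: vec_eq_iff)
  ultimately show ?thesis using refl_image_cbox[of k "-a" a] by simp
qed

lemma refl_has_integral_ball:
  fixes H :: "real^'n \<Rightarrow> real"
  assumes "(H has_integral I) (ball 0 1)"
  shows "((\<lambda>x. H (reflect k x)) has_integral I) (ball 0 1)"
proof -
  obtain a :: "real^'n" where a: "ball 0 1 \<subseteq> cbox (-a) a"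
    using bounded_subset_cbox_symmetric[OF bounded_ball] by blast
  define H' where "H' = (\<lambda>x. if x \<in> ball 0 1 then H x else 0)"
  have "(H' has_integral I) (cbox (-a) a)" unfolding H'_def using has_integral_restrict[OF a] assms by blast
  then have "((\<lambda>x. H' (reflect k x)) has_integral (1 / 1) *\<^sub>R I) (reflect k ` cbox (-a) a)"
  proof (rule has_integral_twiddle[where g = "reflect k" and h = "reflect k", rotated -1])
    show "continuous (at x) (reflect k)" for x
      using linear_continuous_at[OF linear_conv_bounded_linear[THEN iffD1, OF linear_refl]] .
    show "\<exists>w z. reflect k ` cbox u v = cbox w z" for u v using refl_image_cbox by blast
    show "\<exists>w z. reflect k ` cbox u v = cbox w z" for u v using refl_image_cbox by blast
    show "Henstock_Kurzweil_Integration.content (reflect k ` cbox u v) = 1 * Henstock_Kurzweil_Integration.content (cbox u v)" for u v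
      using refl_content by simp
  qed auto
  then have "((\<lambda>x. H' (reflect k x)) has_integral I) (cbox (-a) a)" by (simp add: refl_cbox_sym)
  moreover have "(\<lambda>x. H' (reflect k x)) = (\<lambda>x. if x \<in> ball 0 1 then H (reflect k x) else 0)"
    by (auto simp: H'_def)
  ultimately have "((\<lambda>x. if x \<in> ball 0 1 then H (reflect k x) else 0) has_integral I) (cbox (-a) a)" by simp
  then show ?thesis using has_integral_restrict[OF a, of "\<lambda>x. H (reflect k x)" I] by blast
qed

lemma refl_integral_ball:
  fixes H :: "real^'n \<Rightarrow> real"
  shows "integral (ball 0 1) (\<lambda>x. H (reflect k x)) = integral (ball 0 1) H"
proof (cases "H integrable_on ball 0 1")
  case True
  then show ?thesis using refl_has_integral_ball[OF integrable_integral[OF True], of k] integral_unique by blast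
next
  case False
  have "\<not> (\<lambda>x. H (reflect k x)) integrable_on ball 0 1"
  proof
    assume "(\<lambda>x. H (reflect k x)) integrable_on ball 0 1"
    from refl_has_integral_ball[OF integrable_integral[OF this], of k]
    have "H integrable_on ball 0 1" by auto
    then show False using False by simp
  qed
  then show ?thesis using False by (simp add: not_integrable_integral)
qed

lemma refl_line_deriv:
  assumes "(\<lambda>t. g (reflect k x + t *\<^sub>R axis j 1)) differentiable (at 0)"
  shows "((\<lambda>t. c * g (reflect k (x + t *\<^sub>R axis j 1))) has_real_derivative c * (sg k j * pd j g (reflect k x))) (at 0)"
proof -
  let ?h = "\<lambda>t. g (reflect k x + t *\<^sub>R axis j 1)"
  have h: "(?h has_real_derivative deriv ?h 0) (at 0)"
    using assms by (simp add: DERIV_deriv_iff_real_differentiable)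
  have m: "((\<lambda>t. sg k j * t) has_real_derivative sg k j) (at 0)"
    by (auto intro!: derivative_eq_intros)
  have "((\<lambda>t. ?h (sg k j * t)) has_real_derivative deriv ?h (sg k j * 0) * sg k j) (at 0)"
    using DERIV_chain2[of ?h "deriv ?h 0" "\<lambda>t. sg k j * t" 0 "sg k j"] h m by simp
  then have "((\<lambda>t. c * ?h (sg k j * t)) has_real_derivative c * (deriv ?h 0 * sg k j)) (at 0)"
    by (intro DERIV_cmult) simp
  moreover have "(\<lambda>t. c * g (reflect k (x + t *\<^sub>R axis j 1))) = (\<lambda>t. c * ?h (sg k j * t))"
    by (simp add: refl_line)
  moreover have "deriv ?h 0 = pd j g (reflect k x)" by (simp add: pd_def)
  ultimately show ?thesis by (simp add: mult.commute)
qed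

lemma refl_pd:
  assumes "\<And>y. (\<lambda>t. g (y + t *\<^sub>R axis j 1)) differentiable (at 0)"
  shows "pd j (\<lambda>x. c * g (reflect k x)) = (\<lambda>x. c * (sg k j * pd j g (reflect k x)))"
    and "(\<lambda>t. c * g (reflect k (x + t *\<^sub>R axis j 1))) differentiable (at 0)"
proof -
  show "pd j (\<lambda>x. c * g (reflect k x)) = (\<lambda>x. c * (sg k j * pd j g (reflect k x)))"
  proof
    fix x
    show "pd j (\<lambda>x. c * g (reflect k x)) x = c * (sg k j * pd j g (reflect k x))"
    proof -
      have "deriv (\<lambda>t. c * g (reflect k (x + t *\<^sub>R axis j 1))) 0 = c * (sg k j * pd j g (reflect k x))"
        by (rule DERIV_imp_deriv[OF refl_line_deriv[where g=g and k=k and x=x and j=j and c=c, OF assms]])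
      then show ?thesis by (simp add: pd_def[of j "\<lambda>x. c * g (reflect k x)"])
    qed
  qed
  show "(\<lambda>t. c * g (reflect k (x + t *\<^sub>R axis j 1))) differentiable (at 0)"
    using refl_line_deriv[where g=g and k=k and x=x and j=j and c=c, OF assms] by (auto simp: differentiable_def has_field_derivative_def)
qed

lemma test_fun_refl:
  fixes \<psi> :: "real^'n \<Rightarrow> real"
  assumes "test_fun \<psi>"
  shows "test_fun (\<lambda>x. \<psi> (reflect k x))"
    and "laplacian (\<lambda>x. \<psi> (reflect k x)) x = laplacian \<psi> (reflect k x)"
proof -
  note T = assms[unfolded test_fun_def]
  have T1: "continuous_on UNIV \<psi>" using T by blast
  have T2: "\<And>i y. (\<lambda>t. \<psi> (y + t *\<^sub>R axis i 1)) differentiable (at 0)" using T by blast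
  have T3: "\<And>i. continuous_on UNIV (pd i \<psi>)" using T by blast
  have T4: "\<And>i j y. (\<lambda>t. pd i \<psi> (y + t *\<^sub>R axis j 1)) differentiable (at 0)" using T by blast
  have T5: "\<And>i j. continuous_on UNIV (pd j (pd i \<psi>))" using T by blast
  have T6: "compact (closure {x. \<psi> x \<noteq> 0})" using T by blast
  have T7: "closure {x. \<psi> x \<noteq> 0} \<subseteq> ball 0 1" using T by blast
  have one: "(\<lambda>x. \<psi> (reflect k x)) = (\<lambda>x. 1 * \<psi> (reflect k x))" by simp
  have pd1: "pd i (\<lambda>x. \<psi> (reflect k x)) = (\<lambda>x. sg k i * pd i \<psi> (reflect k x))" for i
    using refl_pd(1)[OF T2, where c=1 and k=k and j=i] by simp
  have pd2: "pd j (pd i (\<lambda>x. \<psi> (reflect k x))) = (\<lambda>x. sg k i * (sg k j * pd j (pd i \<psi>) (reflect k x)))" for i j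
    unfolding pd1 by (rule refl_pd(1)[OF T4])
  have cR: "continuous_on UNIV (reflect k)" by (rule cont_refl)
  show "laplacian (\<lambda>x. \<psi> (reflect k x)) x = laplacian \<psi> (reflect k x)"
    unfolding laplacian_def pd2 by (simp add: mult.assoc[symmetric])
  have supp: "closure {x. \<psi> (reflect k x) \<noteq> 0} \<subseteq> reflect k ` closure {x. \<psi> x \<noteq> 0}"
  proof (rule closure_minimal)
    show "{x. \<psi> (reflect k x) \<noteq> 0} \<subseteq> reflect k ` closure {x. \<psi> x \<noteq> 0}"
    proof
      fix x assume "x \<in> {x. \<psi> (reflect k x) \<noteq> 0}"
      then have "reflect k x \<in> {x. \<psi> x \<noteq> 0}" by simp
      then have "reflect k x \<in> closure {x. \<psi> x \<noteq> 0}" using closure_subset[of "{x. \<psi> x \<noteq> 0}"] by (rule set_mp[rotated])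
      then have "reflect k (reflect k x) \<in> reflect k ` closure {x. \<psi> x \<noteq> 0}" by (rule imageI)
      then show "x \<in> reflect k ` closure {x. \<psi> x \<noteq> 0}" by simp
    qed
    have "compact (reflect k ` closure {x. \<psi> x \<noteq> 0})"
      by (rule compact_continuous_image[OF continuous_on_subset[OF cR] T6]) simp
    then show "closed (reflect k ` closure {x. \<psi> x \<noteq> 0})" by (rule compact_imp_closed)
  qed
  have imgball: "reflect k ` closure {x. \<psi> x \<noteq> 0} \<subseteq> ball 0 1"
  proof
    fix y assume "y \<in> reflect k ` closure {x. \<psi> x \<noteq> 0}"
    then obtain z where z: "z \<in> closure {x. \<psi> x \<noteq> 0}" "y = reflect k z" by blast
    then have "norm z < 1" using T7 by (auto simp: subset_iff)
    then show "y \<in> ball 0 1" using z(2) by simp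
  qed
  show "test_fun (\<lambda>x. \<psi> (reflect k x))"
    unfolding test_fun_def
  proof (intro conjI allI)
    show "continuous_on UNIV (\<lambda>x. \<psi> (reflect k x))"
      using continuous_on_compose[OF cR continuous_on_subset[OF T1]] by (simp add: o_def)
    fix i x
    show "(\<lambda>t. \<psi> (reflect k (x + t *\<^sub>R axis i 1))) differentiable at 0"
      using refl_pd(2)[OF T2, where c=1 and k=k and x=x and j=i] by simp
  next
    fix i
    show "continuous_on UNIV (pd i (\<lambda>x. \<psi> (reflect k x)))"
      unfolding pd1 using continuous_on_compose[OF cR continuous_on_subset[OF T3]]
      by (intro continuous_intros) (simp add: o_def)
  next
    fix i j x
    show "(\<lambda>t. pd i (\<lambda>x. \<psi> (reflect k x)) (x + t *\<^sub>R axis j 1)) differentiable at 0"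
      unfolding pd1 by (rule refl_pd(2)[OF T4])
  next
    fix i j
    show "continuous_on UNIV (pd j (pd i (\<lambda>x. \<psi> (reflect k x))))"
      unfolding pd2 using continuous_on_compose[OF cR continuous_on_subset[OF T5]]
      by (intro continuous_intros) (simp add: o_def)
  next
    have "bounded (reflect k ` closure {x. \<psi> x \<noteq> 0})"
      using compact_continuous_image[OF continuous_on_subset[OF cR] T6] compact_imp_bounded by blast
    from bounded_subset[OF this order_trans[OF closure_subset supp]]
    show "compact (closure {x. \<psi> (reflect k x) \<noteq> 0})" by simp
  next
    show "closure {x. \<psi> (reflect k x) \<noteq> 0} \<subseteq> ball 0 1" using supp imgball by blast
  qed
qed

lemma cont_int_ball:
  fixes h :: "real^'n \<Rightarrow> real"
  assumes "continuous_on (cball 0 1) h"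
  shows "h integrable_on ball 0 1"
proof (rule integrable_spike_set[OF cont_compact_integrable[OF compact_cball assms]])
  show "negligible {x \<in> cball 0 1 - ball 0 1. h x \<noteq> 0}"
    by (rule negligible_subset[OF negligible_sphere[of 0 1]]) auto
  have "{x \<in> ball 0 1 - cball 0 1. h x \<noteq> 0} = {}" using ball_subset_cball by blast
  then show "negligible {x \<in> ball 0 1 - cball 0 1. h x \<noteq> 0}" by (simp only: negligible_empty)
qed

lemma test_cont: "test_fun \<phi> \<Longrightarrow> continuous_on UNIV \<phi>"
  unfolding test_fun_def by blast

lemma lap_cont:
  assumes "test_fun \<phi>"
  shows "continuous_on UNIV (laplacian \<phi>)"
proof -
  have "\<And>i. continuous_on UNIV (pd i (pd i \<phi>))" using assms unfolding test_fun_def by blast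
  then have "continuous_on UNIV (\<lambda>x. \<Sum>i\<in>UNIV. pd i (pd i \<phi>) x)" by (intro continuous_on_sum) auto
  then show ?thesis unfolding laplacian_def[abs_def] .
qed

lemma weak_diff:
  fixes u v :: "real^'n \<Rightarrow> real"
  assumes du: "dirichlet_solution g1 f u" and dv: "dirichlet_solution g2 f v"
    and cg1: "continuous_on UNIV g1" and cg2: "continuous_on UNIV g2"
    and \<phi>: "test_fun \<phi>"
  shows "integral (ball 0 1) (\<lambda>x. (u x - v x) * laplacian \<phi> x) = integral (ball 0 1) (\<lambda>x. (g1 (u x) - g2 (v x)) * \<phi> x)"
proof -
  have cu: "continuous_on (cball 0 1) u" using du unfolding dirichlet_solution_def by blast
  have cv: "continuous_on (cball 0 1) v" using dv unfolding dirichlet_solution_def by blast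
  have cl: "continuous_on (cball 0 1) (laplacian \<phi>)" using lap_cont[OF \<phi>] continuous_on_subset by blast
  have cp: "continuous_on (cball 0 1) \<phi>" using test_cont[OF \<phi>] continuous_on_subset by blast
  have cgu: "continuous_on (cball 0 1) (\<lambda>x. g1 (u x))" using continuous_on_compose2[OF cg1 cu] by simp
  have cgv: "continuous_on (cball 0 1) (\<lambda>x. g2 (v x))" using continuous_on_compose2[OF cg2 cv] by simp
  define Au where "Au = (\<lambda>x. u x * (- laplacian \<phi> x) + g1 (u x) * \<phi> x)"
  define Av where "Av = (\<lambda>x. v x * (- laplacian \<phi> x) + g2 (v x) * \<phi> x)"
  define Gd where "Gd = (\<lambda>x. (g1 (u x) - g2 (v x)) * \<phi> x)"
  have iAu: "Au integrable_on ball 0 1" unfolding Au_def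
    by (intro cont_int_ball continuous_intros cu cl cgu cp)
  have iAv: "Av integrable_on ball 0 1" unfolding Av_def
    by (intro cont_int_ball continuous_intros cv cl cgv cp)
  have iGd: "Gd integrable_on ball 0 1" unfolding Gd_def
    by (intro cont_int_ball continuous_intros cgu cgv cp)
  have eu: "integral (ball 0 1) Au = integral (ball 0 1) (\<lambda>x. f x * \<phi> x)"
    using du \<phi> unfolding dirichlet_solution_def Au_def by blast
  have ev: "integral (ball 0 1) Av = integral (ball 0 1) (\<lambda>x. f x * \<phi> x)"
    using dv \<phi> unfolding dirichlet_solution_def Av_def by blast
  have eq: "(\<lambda>x. (u x - v x) * laplacian \<phi> x) = (\<lambda>x. (Av x - Au x) + Gd x)"
    by (auto simp: Au_def Av_def Gd_def algebra_simps)
  have "integral (ball 0 1) (\<lambda>x. (Av x - Au x) + Gd x) = (integral (ball 0 1) Av - integral (ball 0 1) Au) + integral (ball 0 1) Gd"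
    using integral_add[OF integrable_diff[OF iAv iAu] iGd] integral_diff[OF iAv iAu] by simp
  also have "\<dots> = integral (ball 0 1) Gd" using eu ev by simp
  finally show ?thesis unfolding eq Gd_def .
qed

lemma closure_sub_cball:
  fixes U :: "(real^'n) set"
  assumes "U \<subseteq> ball 0 1"
  shows "closure U \<subseteq> cball 0 1"
  using assms ball_subset_cball closure_minimal[OF _ closed_cball] by blast

lemma uniq:
  fixes u v :: "real^'n \<Rightarrow> real"
  assumes du: "dirichlet_solution g f u" and dv: "dirichlet_solution g f v"
    and cg: "continuous_on UNIV g" and mg: "mono g" and x: "x \<in> ball 0 1"
  shows "u x \<le> v x"
proof (rule ccontr)
  assume "\<not> u x \<le> v x"
  then have uvx: "u x - v x > 0" by simp
  have cu: "continuous_on (cball 0 1) u" using du unfolding dirichlet_solution_def by blast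
  have cv: "continuous_on (cball 0 1) v" using dv unfolding dirichlet_solution_def by blast
  have zu: "\<And>y. y \<in> sphere 0 1 \<Longrightarrow> u y = 0" using du unfolding dirichlet_solution_def by blast
  have zv: "\<And>y. y \<in> sphere 0 1 \<Longrightarrow> v y = 0" using dv unfolding dirichlet_solution_def by blast
  have cw: "continuous_on (cball 0 1) (\<lambda>y. u y - v y)" by (intro continuous_intros cu cv)
  define U where "U = ball 0 1 \<inter> (\<lambda>y. u y - v y) -` {0<..}"
  have oU: "open U" unfolding U_def
    by (rule continuous_open_preimage[OF continuous_on_subset[OF cw ball_subset_cball] open_ball open_greaterThan])
  have Ub: "U \<subseteq> ball 0 1" by (auto simp: U_def)
  have xU: "x \<in> U" using x uvx by (simp add: U_def)
  have "u x - v x \<le> 0"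
  proof (rule max_principle[where w="\<lambda>y. u y - v y", OF oU Ub _ _ _ xU])
    show "continuous_on (closure U) (\<lambda>y. u y - v y)"
      using continuous_on_subset[OF cw closure_sub_cball[OF Ub]] .
    fix y assume y: "y \<in> closure U" "y \<notin> U"
    have yc: "y \<in> cball 0 1" using closure_sub_cball[OF Ub] y(1) by blast
    show "u y - v y \<le> 0"
    proof (cases "y \<in> ball 0 1")
      case True
      then show ?thesis using y(2) by (simp add: U_def)
    next
      case False
      then have "y \<in> sphere 0 1" using yc by auto
      then show ?thesis using zu zv by simp
    qed
  next
    fix \<phi> :: "real^'n \<Rightarrow> real"
    assume \<phi>: "test_fun \<phi>" and \<phi>0: "\<And>x. \<phi> x \<ge> 0" and supp: "closure {x. \<phi> x \<noteq> 0} \<subseteq> U"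
    have "integral (ball 0 1) (\<lambda>x. (u x - v x) * laplacian \<phi> x) = integral (ball 0 1) (\<lambda>x. (g (u x) - g (v x)) * \<phi> x)"
      by (rule weak_diff[OF du dv cg cg \<phi>])
    also have "\<dots> \<ge> 0"
    proof (rule Henstock_Kurzweil_Integration.integral_nonneg)
      show "(\<lambda>x. (g (u x) - g (v x)) * \<phi> x) integrable_on ball 0 1"
      proof -
        have c1: "continuous_on (cball 0 1) (\<lambda>x. g (u x))" using continuous_on_compose2[OF cg cu] by simp
        have c2: "continuous_on (cball 0 1) (\<lambda>x. g (v x))" using continuous_on_compose2[OF cg cv] by simp
        have c3: "continuous_on (cball 0 1) \<phi>" using continuous_on_subset[OF test_cont[OF \<phi>]] by simp
        show ?thesis by (intro cont_int_ball continuous_intros c1 c2 c3)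
      qed
      fix y :: "real^'n" assume "y \<in> ball 0 1"
      show "(g (u y) - g (v y)) * \<phi> y \<ge> 0"
      proof (cases "\<phi> y = 0")
        case False
        then have "y \<in> {x. \<phi> x \<noteq> 0}" by simp
        then have "y \<in> closure {x. \<phi> x \<noteq> 0}" using closure_subset[of "{x. \<phi> x \<noteq> 0}"] by (rule set_mp[rotated])
        then have "y \<in> U" using supp by (rule set_mp[rotated])
        then have "u y \<ge> v y" by (simp add: U_def)
        then have "g (u y) \<ge> g (v y)" using mg by (simp add: monoD)
        then show ?thesis using \<phi>0[of y] by simp
      qed simp
    qed
    finally show "integral (ball 0 1) (\<lambda>x. (u x - v x) * laplacian \<phi> x) \<ge> 0" .
  qed
  then show False using uvx by simp
qed

lemma refl_solution:
  fixes u f :: "real^'n \<Rightarrow> real"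
  assumes du: "dirichlet_solution g f u" and godd: "\<forall>s. g (- s) = - g s"
    and fodd: "\<forall>x\<in>cball 0 1. f (reflect k x) = - f x"
  shows "dirichlet_solution g f (\<lambda>x. - u (reflect k x))"
  unfolding dirichlet_solution_def
proof (intro conjI allI impI ballI)
  have cu: "continuous_on (cball 0 1) u" using du unfolding dirichlet_solution_def by blast
  have "continuous_on (cball 0 1) (\<lambda>x. u (reflect k x))"
    by (rule continuous_on_compose2[OF cu cont_refl]) auto
  then show "continuous_on (cball 0 1) (\<lambda>x. - u (reflect k x))" by (intro continuous_intros)
next
  fix x :: "real^'n" assume "x \<in> sphere 0 1"
  then have "reflect k x \<in> sphere 0 1" by simp
  then show "- u (reflect k x) = 0" using du unfolding dirichlet_solution_def by simp
next
  fix \<psi> :: "real^'n \<Rightarrow> real" assume \<psi>: "test_fun \<psi>"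
  let ?\<phi> = "\<lambda>x. \<psi> (reflect k x)"
  have t\<phi>: "test_fun ?\<phi>" by (rule test_fun_refl(1)[OF \<psi>])
  have l\<phi>: "laplacian ?\<phi> x = laplacian \<psi> (reflect k x)" for x by (rule test_fun_refl(2)[OF \<psi>])
  define H1 where "H1 = (\<lambda>y. u y * (- laplacian \<psi> (reflect k y)) + g (u y) * \<psi> (reflect k y))"
  have eu: "integral (ball 0 1) H1 = integral (ball 0 1) (\<lambda>x. f x * \<psi> (reflect k x))"
  proof -
    have "integral (ball 0 1) (\<lambda>x. u x * (- laplacian ?\<phi> x) + g (u x) * ?\<phi> x) = integral (ball 0 1) (\<lambda>x. f x * ?\<phi> x)"
      using du t\<phi> unfolding dirichlet_solution_def by blast
    then show ?thesis unfolding H1_def l\<phi> .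
  qed
  have "integral (ball 0 1) (\<lambda>x. - u (reflect k x) * (- laplacian \<psi> x) + g (- u (reflect k x)) * \<psi> x)
      = integral (ball 0 1) (\<lambda>x. - H1 (reflect k x))"
    by (rule integral_cong) (simp add: H1_def godd algebra_simps)
  also have "\<dots> = - integral (ball 0 1) H1" by (simp add: refl_integral_ball)
  also have "\<dots> = - integral (ball 0 1) (\<lambda>x. f x * \<psi> (reflect k x))" using eu by simp
  also have "integral (ball 0 1) (\<lambda>x. f x * \<psi> (reflect k x)) = integral (ball 0 1) (\<lambda>x. f (reflect k x) * \<psi> (reflect k (reflect k x)))"
    using refl_integral_ball[of "\<lambda>x. f x * \<psi> (reflect k x)" k] by simp
  also have "\<dots> = integral (ball 0 1) (\<lambda>x. - (f x * \<psi> x))"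
    by (rule integral_cong) (use fodd in auto)
  finally show "integral (ball 0 1) (\<lambda>x. - u (reflect k x) * (- laplacian \<psi> x) + g (- u (reflect k x)) * \<psi> x)
      = integral (ball 0 1) (\<lambda>x. f x * \<psi> x)" by simp
qed

lemma half_mp:
  fixes w :: "real^'n \<Rightarrow> real"
  assumes cw: "continuous_on (cball 0 1) w" and ws: "\<forall>y\<in>sphere 0 1. w y = 0"
    and w0: "\<forall>y\<in>cball 0 1. y $ k = 0 \<longrightarrow> w y = 0"
    and sub: "\<And>\<phi>. test_fun \<phi> \<Longrightarrow> (\<And>x. \<phi> x \<ge> 0) \<Longrightarrow> closure {x. \<phi> x \<noteq> 0} \<subseteq> {y \<in> ball 0 1. y $ k > 0 \<and> w y > 0} \<Longrightarrow>
                 integral (ball 0 1) (\<lambda>x. w x * laplacian \<phi> x) \<ge> 0"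
    and x: "x \<in> ball 0 1" "x $ k > 0"
  shows "w x \<le> 0"
proof (rule ccontr)
  assume "\<not> w x \<le> 0"
  then have wx: "w x > 0" by simp
  have ck: "continuous_on UNIV (\<lambda>y::real^'n. y $ k)" by (intro continuous_intros)
  have cm: "continuous_on (ball 0 1) (\<lambda>y. min (y $ k) (w y))"
    using continuous_on_subset[OF cw ball_subset_cball] continuous_on_subset[OF ck]
    by (intro continuous_intros) auto
  define U where "U = ball 0 1 \<inter> (\<lambda>y. min (y $ k) (w y)) -` {0<..}"
  have Ueq: "U = {y \<in> ball 0 1. y $ k > 0 \<and> w y > 0}" by (auto simp: U_def)
  have oU: "open U" unfolding U_def by (rule continuous_open_preimage[OF cm open_ball open_greaterThan])
  have Ub: "U \<subseteq> ball 0 1" by (auto simp: U_def)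
  have xU: "x \<in> U" using x wx by (simp add: Ueq)
  have clk: "closure U \<subseteq> {y. y $ k \<ge> 0}"
  proof (rule closure_minimal)
    show "U \<subseteq> {y. y $ k \<ge> 0}" by (auto simp: Ueq)
    show "closed {y::real^'n. y $ k \<ge> 0}"
      using closed_Collect_le[OF continuous_on_const ck, of 0] by simp
  qed
  have "w x \<le> 0"
  proof (rule max_principle[where w=w, OF oU Ub _ _ _ xU])
    show "continuous_on (closure U) w" using continuous_on_subset[OF cw closure_sub_cball[OF Ub]] .
    fix y assume y: "y \<in> closure U" "y \<notin> U"
    have yc: "y \<in> cball 0 1" using closure_sub_cball[OF Ub] y(1) by blast
    have yk: "y $ k \<ge> 0" using clk y(1) by blast
    show "w y \<le> 0"
    proof (cases "y \<in> ball 0 1")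
      case True
      show ?thesis
      proof (cases "y $ k > 0")
        case True
        then show ?thesis using y(2) \<open>y \<in> ball 0 1\<close> by (auto simp: Ueq)
      next
        case False
        then have "y $ k = 0" using yk by simp
        then show ?thesis using w0 yc by simp
      qed
    next
      case False
      then have "y \<in> sphere 0 1" using yc by auto
      then show ?thesis using ws by simp
    qed
  next
    fix \<phi> :: "real^'n \<Rightarrow> real"
    assume "test_fun \<phi>" "\<And>x. \<phi> x \<ge> 0" "closure {x. \<phi> x \<noteq> 0} \<subseteq> U"
    then show "integral (ball 0 1) (\<lambda>x. w x * laplacian \<phi> x) \<ge> 0"
      using sub unfolding Ueq by blast
  qed
  then show False using wx by simp
qed

lemma sol_odd:
  fixes u f :: "real^'n \<Rightarrow> real"
  assumes du: "dirichlet_solution g f u" and godd: "\<forall>s. g (- s) = - g s" and mg: "mono g"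
    and cg: "continuous_on UNIV g" and fodd: "\<forall>x\<in>cball 0 1. f (reflect k x) = - f x"
    and x: "x \<in> cball 0 1"
  shows "u (reflect k x) = - u x"
proof -
  have dv: "dirichlet_solution g f (\<lambda>x. - u (reflect k x))" by (rule refl_solution[OF du godd fodd])
  show ?thesis
  proof (cases "x \<in> ball 0 1")
    case True
    have "u x \<le> - u (reflect k x)" by (rule uniq[OF du dv cg mg True])
    moreover have "- u (reflect k x) \<le> u x" by (rule uniq[OF dv du cg mg True])
    ultimately show ?thesis by simp
  next
    case False
    then have xs: "x \<in> sphere 0 1" using x by auto
    then have "reflect k x \<in> sphere 0 1" by simp
    then show ?thesis using du xs unfolding dirichlet_solution_def by simp
  qed
qed

lemma refl_fix: "x $ k = 0 \<Longrightarrow> reflect k x = x"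
  by (simp add: vec_eq_iff)

lemma sol_nonneg:
  fixes u f :: "real^'n \<Rightarrow> real"
  assumes du: "dirichlet_solution g f u" and godd: "\<forall>s. g (- s) = - g s" and mg: "mono g"
    and cg: "continuous_on UNIV g" and cf: "continuous_on (cball 0 1) f"
    and fnn: "\<forall>x\<in>ball 0 1. x $ k > 0 \<longrightarrow> f x \<ge> 0"
    and uodd: "\<And>x. x \<in> cball 0 1 \<Longrightarrow> u (reflect k x) = - u x"
    and x: "x \<in> ball 0 1" "x $ k > 0"
  shows "u x \<ge> 0"
proof -
  have cu: "continuous_on (cball 0 1) u" using du unfolding dirichlet_solution_def by blast
  have zu: "\<forall>y\<in>sphere 0 1. u y = 0" using du unfolding dirichlet_solution_def by blast
  have g0: "g 0 = 0" using godd[rule_format, of 0] by simp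
  have "- u x \<le> 0"
  proof (rule half_mp[where w = "\<lambda>y. - u y" and k = k, OF _ _ _ _ x])
    show "continuous_on (cball 0 1) (\<lambda>y. - u y)" by (intro continuous_intros cu)
    show "\<forall>y\<in>sphere 0 1. - u y = 0" using zu by simp
    show "\<forall>y\<in>cball 0 1. y $ k = 0 \<longrightarrow> - u y = 0"
    proof (intro ballI impI)
      fix y :: "real^'n" assume "y \<in> cball 0 1" "y $ k = 0"
      then have "u y = - u y" using uodd[of y] refl_fix[of y k] by simp
      then show "- u y = 0" by simp
    qed
  next
    fix \<phi> :: "real^'n \<Rightarrow> real"
    assume \<phi>: "test_fun \<phi>" and \<phi>0: "\<And>x. \<phi> x \<ge> 0"
      and supp: "closure {x. \<phi> x \<noteq> 0} \<subseteq> {y \<in> ball 0 1. y $ k > 0 \<and> - u y > 0}"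
    have cl: "continuous_on (cball 0 1) (laplacian \<phi>)" using lap_cont[OF \<phi>] continuous_on_subset by blast
    have cp: "continuous_on (cball 0 1) \<phi>" using test_cont[OF \<phi>] continuous_on_subset by blast
    have cgu: "continuous_on (cball 0 1) (\<lambda>x. g (u x))" using continuous_on_compose2[OF cg cu] by simp
    define Au where "Au = (\<lambda>x. u x * (- laplacian \<phi> x) + g (u x) * \<phi> x)"
    have iAu: "Au integrable_on ball 0 1" unfolding Au_def
      by (intro cont_int_ball continuous_intros cu cl cgu cp)
    have iG: "(\<lambda>x. g (u x) * \<phi> x) integrable_on ball 0 1"
      by (intro cont_int_ball continuous_intros cgu cp)
    have iF: "(\<lambda>x. f x * \<phi> x) integrable_on ball 0 1"
      by (intro cont_int_ball continuous_intros cf cp)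
    have eu: "integral (ball 0 1) Au = integral (ball 0 1) (\<lambda>x. f x * \<phi> x)"
      using du \<phi> unfolding dirichlet_solution_def Au_def by blast
    have eq: "(\<lambda>x. - u x * laplacian \<phi> x) = (\<lambda>x. Au x - g (u x) * \<phi> x)"
      by (auto simp: Au_def algebra_simps)
    have "integral (ball 0 1) (\<lambda>x. - u x * laplacian \<phi> x) = integral (ball 0 1) Au - integral (ball 0 1) (\<lambda>x. g (u x) * \<phi> x)"
      unfolding eq by (rule integral_diff[OF iAu iG])
    also have "\<dots> = integral (ball 0 1) (\<lambda>x. f x * \<phi> x) - integral (ball 0 1) (\<lambda>x. g (u x) * \<phi> x)" using eu by simp
    also have "\<dots> = integral (ball 0 1) (\<lambda>x. f x * \<phi> x - g (u x) * \<phi> x)" by (rule integral_diff[OF iF iG, symmetric])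
    also have "\<dots> \<ge> 0"
    proof (rule Henstock_Kurzweil_Integration.integral_nonneg)
      show "(\<lambda>x. f x * \<phi> x - g (u x) * \<phi> x) integrable_on ball 0 1" by (rule integrable_diff[OF iF iG])
      fix y :: "real^'n" assume "y \<in> ball 0 1"
      show "f y * \<phi> y - g (u y) * \<phi> y \<ge> 0"
      proof (cases "\<phi> y = 0")
        case False
        then have "y \<in> {x. \<phi> x \<noteq> 0}" by simp
        then have "y \<in> closure {x. \<phi> x \<noteq> 0}" using closure_subset[of "{x. \<phi> x \<noteq> 0}"] by (rule set_mp[rotated])
        then have yU: "y \<in> {y \<in> ball 0 1. y $ k > 0 \<and> - u y > 0}" using supp by (rule set_mp[rotated])
        then have "f y \<ge> 0" using fnn by simp
        moreover have "g (u y) \<le> g 0" using yU mg by (simp add: monoD)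
        ultimately have "f y - g (u y) \<ge> 0" using g0 by simp
        then have "(f y - g (u y)) * \<phi> y \<ge> 0" using \<phi>0[of y] by simp
        then show ?thesis by (simp add: algebra_simps)
      qed simp
    qed
    finally show "integral (ball 0 1) (\<lambda>x. - u x * laplacian \<phi> x) \<ge> 0" .
  qed
  then show ?thesis by simp
qed

lemma C1_cont:
  assumes "\<exists>g'. continuous_on UNIV g' \<and> (\<forall>s. (g has_real_derivative g' s) (at s))"
  shows "continuous_on UNIV g"
proof -
  from assms obtain g' where "\<forall>s. (g has_real_derivative g' s) (at s)" by blast
  then show ?thesis by (meson DERIV_isCont continuous_at_imp_continuous_on)
qed

theorem corollary2p2:
  fixes f :: "real^'n::finite \<Rightarrow> real"
    and k :: 'n
    and g1 g2 :: "real \<Rightarrow> real"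
    and u1 u2 :: "real^'n \<Rightarrow> real"
  assumes N2: "CARD('n) \<ge> 2"
    and f_cont: "continuous_on (cball 0 1) f"
    and f_odd: "\<forall>x\<in>cball 0 1. f (reflect k x) = - f x"
    and f_nonneg: "\<forall>x\<in>ball 0 1. x $ k > 0 \<longrightarrow> f x \<ge> 0"
    and g1_C1: "\<exists>g1'. continuous_on UNIV g1' \<and> (\<forall>s. (g1 has_real_derivative g1' s) (at s))"
    and g2_C1: "\<exists>g2'. continuous_on UNIV g2' \<and> (\<forall>s. (g2 has_real_derivative g2' s) (at s))"
    and g1_odd: "\<forall>s. g1 (- s) = - g1 s"
    and g2_odd: "\<forall>s. g2 (- s) = - g2 s"
    and g1_mono: "mono g1"
    and g2_mono: "mono g2"
    and g12: "\<forall>s\<ge>0. g1 s \<le> g2 s"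
    and u1: "dirichlet_solution g1 f u1"
    and u2: "dirichlet_solution g2 f u2"
  shows "\<forall>x\<in>ball 0 1. \<bar>u1 x\<bar> \<ge> \<bar>u2 x\<bar>"
proof
  have cg1: "continuous_on UNIV g1" by (rule C1_cont[OF g1_C1])
  have cg2: "continuous_on UNIV g2" by (rule C1_cont[OF g2_C1])
  have o1: "\<And>x. x \<in> cball 0 1 \<Longrightarrow> u1 (reflect k x) = - u1 x"
    by (rule sol_odd[OF u1 g1_odd g1_mono cg1 f_odd])
  have o2: "\<And>x. x \<in> cball 0 1 \<Longrightarrow> u2 (reflect k x) = - u2 x"
    by (rule sol_odd[OF u2 g2_odd g2_mono cg2 f_odd])
  have n1: "\<And>x. x \<in> ball 0 1 \<Longrightarrow> x $ k > 0 \<Longrightarrow> u1 x \<ge> 0"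
    by (rule sol_nonneg[OF u1 g1_odd g1_mono cg1 f_cont f_nonneg o1])
  have n2: "\<And>x. x \<in> ball 0 1 \<Longrightarrow> x $ k > 0 \<Longrightarrow> u2 x \<ge> 0"
    by (rule sol_nonneg[OF u2 g2_odd g2_mono cg2 f_cont f_nonneg o2])
  have cu1: "continuous_on (cball 0 1) u1" using u1 unfolding dirichlet_solution_def by blast
  have cu2: "continuous_on (cball 0 1) u2" using u2 unfolding dirichlet_solution_def by blast
  have zu1: "\<forall>y\<in>sphere 0 1. u1 y = 0" using u1 unfolding dirichlet_solution_def by blast
  have zu2: "\<forall>y\<in>sphere 0 1. u2 y = 0" using u2 unfolding dirichlet_solution_def by blast
  have comp: "u2 x - u1 x \<le> 0" if x: "x \<in> ball 0 1" "x $ k > 0" for x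
  proof (rule half_mp[where w = "\<lambda>y. u2 y - u1 y" and k = k, OF _ _ _ _ x])
    show "continuous_on (cball 0 1) (\<lambda>y. u2 y - u1 y)" by (intro continuous_intros cu1 cu2)
    show "\<forall>y\<in>sphere 0 1. u2 y - u1 y = 0" using zu1 zu2 by simp
    show "\<forall>y\<in>cball 0 1. y $ k = 0 \<longrightarrow> u2 y - u1 y = 0"
    proof (intro ballI impI)
      fix y :: "real^'n" assume "y \<in> cball 0 1" "y $ k = 0"
      then have "u1 y = - u1 y" "u2 y = - u2 y" using o1[of y] o2[of y] refl_fix[of y k] by simp_all
      then show "u2 y - u1 y = 0" by simp
    qed
  next
    fix \<phi> :: "real^'n \<Rightarrow> real"
    assume \<phi>: "test_fun \<phi>" and \<phi>0: "\<And>x. \<phi> x \<ge> 0"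
      and supp: "closure {x. \<phi> x \<noteq> 0} \<subseteq> {y \<in> ball 0 1. y $ k > 0 \<and> u2 y - u1 y > 0}"
    have "integral (ball 0 1) (\<lambda>x. (u2 x - u1 x) * laplacian \<phi> x) = integral (ball 0 1) (\<lambda>x. (g2 (u2 x) - g1 (u1 x)) * \<phi> x)"
      by (rule weak_diff[OF u2 u1 cg2 cg1 \<phi>])
    also have "\<dots> \<ge> 0"
    proof (rule Henstock_Kurzweil_Integration.integral_nonneg)
      have c1: "continuous_on (cball 0 1) (\<lambda>x. g1 (u1 x))" using continuous_on_compose2[OF cg1 cu1] by simp
      have c2: "continuous_on (cball 0 1) (\<lambda>x. g2 (u2 x))" using continuous_on_compose2[OF cg2 cu2] by simp
      have c3: "continuous_on (cball 0 1) \<phi>" using continuous_on_subset[OF test_cont[OF \<phi>]] by simp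
      show "(\<lambda>x. (g2 (u2 x) - g1 (u1 x)) * \<phi> x) integrable_on ball 0 1"
        by (intro cont_int_ball continuous_intros c1 c2 c3)
      fix y :: "real^'n" assume "y \<in> ball 0 1"
      show "(g2 (u2 y) - g1 (u1 y)) * \<phi> y \<ge> 0"
      proof (cases "\<phi> y = 0")
        case False
        then have "y \<in> {x. \<phi> x \<noteq> 0}" by simp
        then have "y \<in> closure {x. \<phi> x \<noteq> 0}" using closure_subset[of "{x. \<phi> x \<noteq> 0}"] by (rule set_mp[rotated])
        then have yU: "y \<in> {y \<in> ball 0 1. y $ k > 0 \<and> u2 y - u1 y > 0}" using supp by (rule set_mp[rotated])
        then have "u1 y \<ge> 0" using n1 by simp
        with yU have "u2 y \<ge> 0" "u1 y \<le> u2 y" by auto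
        then have "g1 (u2 y) \<le> g2 (u2 y)" "g1 (u1 y) \<le> g1 (u2 y)" using g12 g1_mono by (auto simp: monoD)
        then have "g2 (u2 y) - g1 (u1 y) \<ge> 0" by simp
        then show ?thesis using \<phi>0[of y] by simp
      qed simp
    qed
    finally show "integral (ball 0 1) (\<lambda>x. (u2 x - u1 x) * laplacian \<phi> x) \<ge> 0" .
  qed
  fix x :: "real^'n" assume x: "x \<in> ball 0 1"
  have xc: "x \<in> cball 0 1" using x by simp
  consider "x $ k > 0" | "x $ k < 0" | "x $ k = 0" by linarith
  then show "\<bar>u1 x\<bar> \<ge> \<bar>u2 x\<bar>"
  proof cases
    case 1
    then show ?thesis using comp[OF x 1] n1[OF x 1] n2[OF x 1] by simp
  next
    case 2
    define y where "y = reflect k x"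
    have y: "y \<in> ball 0 1" "y $ k > 0" using x 2 by (auto simp: y_def)
    have "u1 y = - u1 x" "u2 y = - u2 x" using o1[OF xc] o2[OF xc] by (simp_all add: y_def)
    then show ?thesis using comp[OF y] n1[OF y] n2[OF y] by simp
  next
    case 3
    then have "u1 x = - u1 x" "u2 x = - u2 x" using o1[OF xc] o2[OF xc] refl_fix[of x k] by simp_all
    then show ?thesis by simp
  qed
qed

end
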